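(* Let $R$ be a field and consider persistence modules over $(R, \mathbb{R}_{\ge 0}, \mathbb{R})$. If $M$ is finitely presented and bounded, then $M$ admits a critical series and $C(\varepsilon(M)) = \chi_{\mathcal{O}}(M)$, i.e. for every $g \in \mathbb{R}$ the value $\chi_{\mathcal{O}}(M)(g)$ equals the coefficient of $x^g$ in $C(\varepsilon(M))$.
   Context: A persistence module over $(R,\mathbb{R}_{\ge 0},\mathbb{R})$ is an $\mathbb{R}$-graded $R$-vector space $M = \bigoplus_{g\in\mathbb{R}} M_g$ with an action of the monoid ring $P = R[\mathbb{R}_{\ge 0}]$ such that the monomial $s \in \mathbb{R}_{\ge0}$ maps $M_g$ into $M_{g+s}$; morphisms are graded $P$-module homomorphisms. Free persistence modules are direct sums of shifted copies of $P$ (generated by homogeneous elements); $M$ is finitely presented if it is the cokernel of a morphism between finitely generated free persistence modules, and bounded if $\{g : M_g \ne 0\}$ is contained in a bounded interval. For $a<b$ real, $\operatorname{Region}[a,b)$ is the persistence module that is $R$ in degrees $g\in[a,b)$ and $0$ elsewhere, with the action of $s$ from degree $g$ to $g+s$ the identity if $[g,g+s]\subseteq[a,b)$ and $0$ otherwise. Every finitely presented bounded $M$ is isomorphic to a finite direct sum $\bigoplus_{i=1}^n \operatorname{Region}[\alpha_i,\alpha_i+\ell_i)$ with $\alpha_i\in\mathbb{R}$, $0<\ell_i<\infty$; its barcode is $\varepsilon(M) = \sum_{i=1}^n x^{\alpha_i}y^{\ell_i}$ (a formal sum with real exponents), and for a barcode $f = \sum_i x^{\alpha_i}y^{\ell_i}$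 one sets $B(f) = \sum_i x^{\alpha_i}$, $D(f) = \sum_i x^{\alpha_i+\ell_i}$, $C(f) = B(f)-D(f)$ (formal finite integer combinations of $x^g$, $g\in\mathbb{R}$). For $g\in\mathbb{R}$, $M_{\prec g} = \sum_{h<g} (g-h)M_h \subseteq M_g$ and $\mathcal{O}_g(M) = M_g/M_{\prec g}$; this is an additive functor (morphisms act by the induced maps). Given a free resolution $\cdots\to F_1\to F_0\to M\to 0$, let $H_i(\mathcal{O}_g)(M)$ be the $i$-th homology of $\cdots\to\mathcal{O}_g(F_1)\to\mathcal{O}_g(F_0)\to 0$. $M$ admits a critical series if for each $g$ all these are finite-dimensional and only finitely many are nonzero; then $\chi_{\mathcal{O}}(M)(g) = \sum_i (-1)^i \dim H_i(\mathcal{O}_g)(M)$, identified with the formal sum $\sum_g \chi_{\mathcal{O}}(M)(g)x^g$. *)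

theory Defs
  imports Complex_Main
begin

text \<open>Vector spaces over a field 'k are modelled as subspaces of the function
space 'i \<Rightarrow> 'k with pointwise operations.\<close>

definition vzero :: "'i \<Rightarrow> 'k::field" where "vzero = (\<lambda>i. 0)"
definition vadd :: "('i \<Rightarrow> 'k::field) \<Rightarrow> ('i \<Rightarrow> 'k) \<Rightarrow> ('i \<Rightarrow> 'k)"
  where "vadd x y = (\<lambda>i. x i + y i)"
definition vscale :: "'k::field \<Rightarrow> ('i \<Rightarrow> 'k) \<Rightarrow> ('i \<Rightarrow> 'k)"
  where "vscale c x = (\<lambda>i. c * x i)"

definition lincomb :: "'t set \<Rightarrow> ('t \<Rightarrow> 'k::field) \<Rightarrow> ('t \<Rightarrow> 'i \<Rightarrow> 'k) \<Rightarrow> ('i \<Rightarrow> 'k)"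
  where "lincomb T c v = (\<lambda>i. \<Sum>t\<in>T. c t * v t i)"

definition lin_span :: "('i \<Rightarrow> 'k::field) set \<Rightarrow> ('i \<Rightarrow> 'k) set" where
  "lin_span S = {x. \<exists>T c. finite T \<and> T \<subseteq> S \<and> x = lincomb T c (\<lambda>t. t)}"

definition is_subspace :: "('i \<Rightarrow> 'k::field) set \<Rightarrow> bool" where
  "is_subspace S \<longleftrightarrow> vzero \<in> S \<and> (\<forall>x\<in>S. \<forall>y\<in>S. vadd x y \<in> S) \<and> (\<forall>c. \<forall>x\<in>S. vscale c x \<in> S)"

definition linear_on :: "('i \<Rightarrow> 'k::field) set \<Rightarrow> (('i \<Rightarrow> 'k) \<Rightarrow> ('j \<Rightarrow> 'k)) \<Rightarrow> bool" where
  "linear_on S f \<longleftrightarrow> (\<forall>x\<in>S. \<forall>y\<in>S. f (vadd x y) = vadd (f x) (f y)) \<and>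
                     (\<forall>c. \<forall>x\<in>S. f (vscale c x) = vscale c (f x))"

text \<open>Quotient dimension dim(W/U) (meaningful for subspaces U \<subseteq> W), and its finiteness.\<close>
definition qfin :: "('i \<Rightarrow> 'k::field) set \<Rightarrow> ('i \<Rightarrow> 'k) set \<Rightarrow> bool" where
  "qfin W U \<longleftrightarrow> (\<exists>B. finite B \<and> B \<subseteq> W \<and> W \<subseteq> lin_span (U \<union> B))"

definition qdim :: "('i \<Rightarrow> 'k::field) set \<Rightarrow> ('i \<Rightarrow> 'k) set \<Rightarrow> nat" where
  "qdim W U = (LEAST n. \<exists>B. finite B \<and> card B = n \<and> B \<subseteq> W \<and> W \<subseteq> lin_span (U \<union> B))"

text \<open>A persistence module over (k, R_{\<ge>0}, R): graded pieces M_g and the action of the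
monomial s \<ge> 0 from M_g to M_{g+s}.\<close>
record ('i, 'k) pmod =
  sp  :: "real \<Rightarrow> ('i \<Rightarrow> 'k) set"
  act :: "real \<Rightarrow> real \<Rightarrow> ('i \<Rightarrow> 'k) \<Rightarrow> ('i \<Rightarrow> 'k)"

definition is_pmod :: "('i, 'k::field) pmod \<Rightarrow> bool" where
  "is_pmod M \<longleftrightarrow>
     (\<forall>g. is_subspace (sp M g)) \<and>
     (\<forall>g s. s \<ge> 0 \<longrightarrow> linear_on (sp M g) (act M g s) \<and> act M g s ` sp M g \<subseteq> sp M (g + s)) \<and>
     (\<forall>g. \<forall>x\<in>sp M g. act M g 0 x = x) \<and>
     (\<forall>g s t. s \<ge> 0 \<longrightarrow> t \<ge> 0 \<longrightarrow> (\<forall>x\<in>sp M g. act M (g + s) t (act M g s x) = act M g (s + t) x))"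

definition morph :: "('i, 'k::field) pmod \<Rightarrow> ('j, 'k) pmod \<Rightarrow> (real \<Rightarrow> ('i \<Rightarrow> 'k) \<Rightarrow> ('j \<Rightarrow> 'k)) \<Rightarrow> bool" where
  "morph M N f \<longleftrightarrow> is_pmod M \<and> is_pmod N \<and>
     (\<forall>g. linear_on (sp M g) (f g) \<and> f g ` sp M g \<subseteq> sp N g) \<and>
     (\<forall>g s. s \<ge> 0 \<longrightarrow> (\<forall>x\<in>sp M g. f (g + s) (act M g s x) = act N g s (f g x)))"

text \<open>J is a homogeneous basis: pairs (b, a) with b \<in> M_a, such that for every g the elements
s^(g-a) b with a \<le> g form a basis (as an indexed family) of M_g; i.e. M \<cong> \<Oplus> P(-a).\<close>
definition free_basis :: "('i, 'k::field) pmod \<Rightarrow> (('i \<Rightarrow> 'k) \<times> real) set \<Rightarrow> bool" where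
  "free_basis M J \<longleftrightarrow> (\<forall>(b, a)\<in>J. b \<in> sp M a) \<and>
     (\<forall>g. (\<forall>T c. finite T \<longrightarrow> T \<subseteq> {(b, a)\<in>J. a \<le> g} \<longrightarrow>
              lincomb T c (\<lambda>(b, a). act M a (g - a) b) = vzero \<longrightarrow> (\<forall>t\<in>T. c t = 0)) \<and>
          (\<forall>x\<in>sp M g. \<exists>T c. finite T \<and> T \<subseteq> {(b, a)\<in>J. a \<le> g} \<and>
              x = lincomb T c (\<lambda>(b, a). act M a (g - a) b)))"

definition is_free :: "('i, 'k::field) pmod \<Rightarrow> bool" where
  "is_free M \<longleftrightarrow> is_pmod M \<and> (\<exists>J. free_basis M J)"

definition fg_free :: "('i, 'k::field) pmod \<Rightarrow> bool" where
  "fg_free M \<longleftrightarrow> is_pmod M \<and> (\<exists>J. finite J \<and> free_basis M J)"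

definition finitely_presented :: "('i, 'k::field) pmod \<Rightarrow> bool" where
  "finitely_presented M \<longleftrightarrow> is_pmod M \<and>
     (\<exists>(F0 :: (nat, 'k) pmod) (F1 :: (nat, 'k) pmod) d p.
        fg_free F0 \<and> fg_free F1 \<and> morph F1 F0 d \<and> morph F0 M p \<and>
        (\<forall>g. p g ` sp F0 g = sp M g \<and> {x\<in>sp F0 g. p g x = vzero} = d g ` sp F1 g))"

definition bounded_pmod :: "('i, 'k::field) pmod \<Rightarrow> bool" where
  "bounded_pmod M \<longleftrightarrow> (\<exists>a b. \<forall>g. sp M g \<noteq> {vzero} \<longrightarrow> a \<le> g \<and> g \<le> b)"

text \<open>The direct sum of the modules Region[\<alpha>_i, \<alpha>_i + \<ell>_i) for bars = [(\<alpha>_i, \<ell>_i)].\<close>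
definition region_sum :: "(real \<times> real) list \<Rightarrow> (nat, 'k::field) pmod" where
  "region_sum bars =
     \<lparr> sp = (\<lambda>g. {v. \<forall>i. v i \<noteq> 0 \<longrightarrow> i < length bars \<and> fst (bars ! i) \<le> g \<and>
                                      g < fst (bars ! i) + snd (bars ! i)}),
       act = (\<lambda>g s v. (\<lambda>i. if i < length bars \<and> g + s < fst (bars ! i) + snd (bars ! i) then v i else 0)) \<rparr>"

text \<open>M \<cong> \<Oplus>_i Region[\<alpha>_i, \<alpha>_i + \<ell>_i), 0 < \<ell>_i < \<infinity>; the barcode is then \<Sum> x^\<alpha>_i y^\<ell>_i.\<close>
definition barcode_decomp :: "('i, 'k::field) pmod \<Rightarrow> (real \<times> real) list \<Rightarrow> bool" where
  "barcode_decomp M bars \<longleftrightarrow> (\<forall>(al, len)\<in>set bars. 0 < len) \<and>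
     (\<exists>f. morph M (region_sum bars :: (nat, 'k) pmod) f \<and>
          (\<forall>g. bij_betw (f g) (sp M g) (sp (region_sum bars :: (nat, 'k) pmod) g)))"

text \<open>Coefficient of x^g in C(f) = B(f) - D(f).\<close>
definition C_coeff :: "(real \<times> real) list \<Rightarrow> real \<Rightarrow> int" where
  "C_coeff bars g = int (length (filter (\<lambda>(al, len). al = g) bars))
                  - int (length (filter (\<lambda>(al, len). al + len = g) bars))"

definition prec :: "('i, 'k::field) pmod \<Rightarrow> real \<Rightarrow> ('i \<Rightarrow> 'k) set" where
  "prec M g = lin_span (\<Union>h\<in>{h. h < g}. act M h (g - h) ` sp M h)"

text \<open>Free resolution ... \<rightarrow> F_1 \<rightarrow> F_0 \<rightarrow> M \<rightarrow> 0, with d i : F (i+1) \<rightarrow> F i and e : F 0 \<rightarrow> M.\<close>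
definition free_resolution :: "('i, 'k::field) pmod \<Rightarrow> (nat \<Rightarrow> ('j, 'k) pmod)
    \<Rightarrow> (nat \<Rightarrow> real \<Rightarrow> ('j \<Rightarrow> 'k) \<Rightarrow> ('j \<Rightarrow> 'k)) \<Rightarrow> (real \<Rightarrow> ('j \<Rightarrow> 'k) \<Rightarrow> ('i \<Rightarrow> 'k)) \<Rightarrow> bool" where
  "free_resolution M F d e \<longleftrightarrow>
     (\<forall>i. is_free (F i)) \<and> (\<forall>i. morph (F (Suc i)) (F i) (d i)) \<and> morph (F 0) M e \<and>
     (\<forall>g. e g ` sp (F 0) g = sp M g \<and>
          {x\<in>sp (F 0) g. e g x = vzero} = d 0 g ` sp (F 1) g \<and>
          (\<forall>i. {x\<in>sp (F (Suc i)) g. d i g x = vzero} = d (Suc i) g ` sp (F (Suc (Suc i))) g))"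

text \<open>H_i(O_g)(M) computed from the resolution: the homology of
O_g(F_{i+1}) \<rightarrow> O_g(F_i) \<rightarrow> O_g(F_{i-1}) with O_g(F) = F_g / F_{\<prec>g}, written as
the quotient cyc/bnd of subspaces of (F_i)_g (the preimages in F_i,g of kernel and image).\<close>
definition cyc :: "(nat \<Rightarrow> ('j, 'k::field) pmod) \<Rightarrow> (nat \<Rightarrow> real \<Rightarrow> ('j \<Rightarrow> 'k) \<Rightarrow> ('j \<Rightarrow> 'k))
    \<Rightarrow> real \<Rightarrow> nat \<Rightarrow> ('j \<Rightarrow> 'k) set" where
  "cyc F d g i = (if i = 0 then sp (F 0) g
                  else {x\<in>sp (F i) g. d (i - 1) g x \<in> prec (F (i - 1)) g})"

definition bnd :: "(nat \<Rightarrow> ('j, 'k::field) pmod) \<Rightarrow> (nat \<Rightarrow> real \<Rightarrow> ('j \<Rightarrow> 'k) \<Rightarrow> ('j \<Rightarrow> 'k))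
    \<Rightarrow> real \<Rightarrow> nat \<Rightarrow> ('j \<Rightarrow> 'k) set" where
  "bnd F d g i = lin_span (d i g ` sp (F (Suc i)) g \<union> prec (F i) g)"

definition critical_series :: "(nat \<Rightarrow> ('j, 'k::field) pmod) \<Rightarrow> (nat \<Rightarrow> real \<Rightarrow> ('j \<Rightarrow> 'k) \<Rightarrow> ('j \<Rightarrow> 'k)) \<Rightarrow> bool" where
  "critical_series F d \<longleftrightarrow>
     (\<forall>g. (\<forall>i. qfin (cyc F d g i) (bnd F d g i)) \<and> finite {i. \<not> cyc F d g i \<subseteq> bnd F d g i})"

definition chiO :: "(nat \<Rightarrow> ('j, 'k::field) pmod) \<Rightarrow> (nat \<Rightarrow> real \<Rightarrow> ('j \<Rightarrow> 'k) \<Rightarrow> ('j \<Rightarrow> 'k)) \<Rightarrow> real \<Rightarrow> int" where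
  "chiO F d g = (\<Sum>i\<in>{i. \<not> cyc F d g i \<subseteq> bnd F d g i}. (-1) ^ i * int (qdim (cyc F d g i) (bnd F d g i)))"

end

theory Submission
  imports Defs "HOL-Library.Function_Algebras"
begin

interpretation V: vector_space "vscale :: 'k::field \<Rightarrow> ('i \<Rightarrow> 'k) \<Rightarrow> ('i \<Rightarrow> 'k)"
  by unfold_locales (auto simp: vscale_def fun_eq_iff algebra_simps)

lemma vzero_eq: "vzero = 0" by (simp add: vzero_def fun_eq_iff)
lemma vadd_eq: "vadd x y = x + y" by (simp add: vadd_def fun_eq_iff)
lemma sum_fun_app: "(\<Sum>t\<in>T. (f t :: 'i \<Rightarrow> 'a::comm_monoid_add)) i = (\<Sum>t\<in>T. f t i)"
  by (induct T rule: infinite_finite_induct) auto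
lemma lincomb_eq: "lincomb T c v = (\<Sum>t\<in>T. vscale (c t) (v t))"
  by (simp add: lincomb_def fun_eq_iff sum_fun_app vscale_def)
lemma lin_span_eq: "lin_span S = V.span S"
  by (auto simp: lin_span_def V.span_explicit lincomb_eq)
lemma is_subspace_eq: "is_subspace S = V.subspace S"
  by (simp add: is_subspace_def V.subspace_def vzero_eq vadd_eq)
lemma linear_on_eq: "linear_on S f \<longleftrightarrow> (\<forall>x\<in>S. \<forall>y\<in>S. f (x + y) = f x + f y) \<and> (\<forall>c. \<forall>x\<in>S. f (vscale c x) = vscale c (f x))"
  by (simp add: linear_on_def vadd_eq)


declare plus_fun_apply[simp del] zero_fun_apply[simp del]

lemma lin_zero: "linear_on S f \<Longrightarrow> V.subspace S \<Longrightarrow> f 0 = 0"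
  unfolding linear_on_eq
  by (metis V.scale_zero_left V.subspace_0)

lemma lin_add: "linear_on S f \<Longrightarrow> x \<in> S \<Longrightarrow> y \<in> S \<Longrightarrow> f (x + y) = f x + f y"
  unfolding linear_on_eq by blast

lemma lin_scale: "linear_on S f \<Longrightarrow> x \<in> S \<Longrightarrow> f (vscale c x) = vscale c (f x)"
  unfolding linear_on_eq by blast

lemma neg_vscale: "vscale (-1) y = - y"
  by (simp only: V.scale_minus_left V.scale_one)

lemma lin_neg: "linear_on S f \<Longrightarrow> x \<in> S \<Longrightarrow> f (- x) = - f x"
  using lin_scale[of S f x "-1"] by (simp add: neg_vscale)

lemma lin_diff: "linear_on S f \<Longrightarrow> V.subspace S \<Longrightarrow> x \<in> S \<Longrightarrow> y \<in> S \<Longrightarrow> f (x - y) = f x - f y"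
proof -
  assume a: "linear_on S f" "V.subspace S" "x \<in> S" "y \<in> S"
  have "-y \<in> S" using a by (simp add: V.subspace_neg)
  then show ?thesis unfolding diff_conv_add_uminus using a lin_add[of S f x "-y"] lin_neg[of S f y] by simp
qed

lemma lin_sum: "linear_on S f \<Longrightarrow> V.subspace S \<Longrightarrow> (\<And>t. t \<in> T \<Longrightarrow> v t \<in> S) \<Longrightarrow>
   f (\<Sum>t\<in>T. v t) = (\<Sum>t\<in>T. f (v t))"
proof (induct T rule: infinite_finite_induct)
  case (infinite A)
  have "f 0 = 0" using lin_zero[of S f] infinite by blast
  have e1: "sum v A = 0" by (rule sum.infinite[OF infinite(1)])
  have e2: "(\<Sum>t\<in>A. f (v t)) = 0" by (rule sum.infinite[OF infinite(1)])
  show ?case unfolding e1 e2 by (rule \<open>f 0 = 0\<close>)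
next
  case empty then show ?case unfolding sum.empty using lin_zero[of S f] by blast
next
  case (insert x F)
  have "sum v F \<in> S" using insert by (intro V.subspace_sum) auto
  then show ?case using insert lin_add[of S f "v x" "sum v F"] by auto
qed

lemma lin_span_sub: "V.subspace S \<Longrightarrow> linear_on S f \<Longrightarrow> B \<subseteq> S \<Longrightarrow> x \<in> V.span B \<Longrightarrow> f x \<in> V.span (f ` B)"
proof -
  assume S: "V.subspace S" and f: "linear_on S f" and B: "B \<subseteq> S" and x: "x \<in> V.span B"
  from x obtain t r where t: "finite t" "t \<subseteq> B" and xe: "x = (\<Sum>a\<in>t. vscale (r a) a)"
    unfolding V.span_explicit by blast
  have "f x = (\<Sum>a\<in>t. f (vscale (r a) a))" unfolding xe
    using t B by (intro lin_sum[OF f S]) (auto intro: V.subspace_scale[OF S])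
  also have "\<dots> = (\<Sum>a\<in>t. vscale (r a) (f a))" using t B lin_scale[OF f] by (intro sum.cong) auto
  also have "\<dots> \<in> V.span (f ` B)" using t
    by (intro V.span_sum V.span_scale V.span_base) auto
  finally show ?thesis .
qed

lemma pmod_sub: "is_pmod M \<Longrightarrow> V.subspace (sp M g)"
  by (simp add: is_pmod_def is_subspace_eq)

lemma pmod_lin: "is_pmod M \<Longrightarrow> s \<ge> 0 \<Longrightarrow> linear_on (sp M g) (act M g s)"
  by (simp add: is_pmod_def)

lemma pmod_act_in: "is_pmod M \<Longrightarrow> s \<ge> 0 \<Longrightarrow> x \<in> sp M g \<Longrightarrow> act M g s x \<in> sp M (g + s)"
  unfolding is_pmod_def by blast

lemma act_in: "is_pmod M \<Longrightarrow> h \<le> g \<Longrightarrow> x \<in> sp M h \<Longrightarrow> act M h (g - h) x \<in> sp M g"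
  using pmod_act_in[of M "g - h" x h] by simp

lemma act_comp: "is_pmod M \<Longrightarrow> h \<le> H \<Longrightarrow> H \<le> g \<Longrightarrow> x \<in> sp M h \<Longrightarrow>
   act M H (g - H) (act M h (H - h) x) = act M h (g - h) x"
proof -
  assume M: "is_pmod M" and hH: "h \<le> H" and Hg: "H \<le> g" and x: "x \<in> sp M h"
  have c: "\<forall>g s t. s \<ge> 0 \<longrightarrow> t \<ge> 0 \<longrightarrow> (\<forall>x\<in>sp M g. act M (g + s) t (act M g s x) = act M g (s + t) x)"
    using M unfolding is_pmod_def by blast
  have "act M (h + (H - h)) (g - H) (act M h (H - h) x) = act M h ((H - h) + (g - H)) x"
    using c[rule_format, of "H - h" "g - H" x h] hH Hg x by simp
  then show ?thesis by simp
qed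

lemma act_add: "is_pmod M \<Longrightarrow> h \<le> g \<Longrightarrow> x \<in> sp M h \<Longrightarrow> y \<in> sp M h \<Longrightarrow>
   act M h (g - h) (x + y) = act M h (g - h) x + act M h (g - h) y"
  by (rule lin_add[OF pmod_lin]) auto

lemma act_scale: "is_pmod M \<Longrightarrow> h \<le> g \<Longrightarrow> x \<in> sp M h \<Longrightarrow>
   act M h (g - h) (vscale c x) = vscale c (act M h (g - h) x)"
  by (rule lin_scale[OF pmod_lin]) auto

lemma act_zero: "is_pmod M \<Longrightarrow> h \<le> g \<Longrightarrow> act M h (g - h) 0 = 0"
  using lin_zero[of "sp M h" "act M h (g - h)"] pmod_lin[of M "g - h" h] pmod_sub[of M h] by simp

lemma act_diff: "is_pmod M \<Longrightarrow> h \<le> g \<Longrightarrow> x \<in> sp M h \<Longrightarrow> y \<in> sp M h \<Longrightarrow>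
   act M h (g - h) (x - y) = act M h (g - h) x - act M h (g - h) y"
  using lin_diff[of "sp M h" "act M h (g - h)" x y] pmod_lin[of M "g - h" h] pmod_sub[of M h] by simp

lemma act_self: "is_pmod M \<Longrightarrow> x \<in> sp M g \<Longrightarrow> act M g 0 x = x"
  by (simp add: is_pmod_def)

lemma morph_lin: "morph M N f \<Longrightarrow> linear_on (sp M g) (f g)"
  by (simp add: morph_def)
lemma morph_in: "morph M N f \<Longrightarrow> x \<in> sp M g \<Longrightarrow> f g x \<in> sp N g"
  unfolding morph_def by blast
lemma morph_pm1: "morph M N f \<Longrightarrow> is_pmod M" by (simp add: morph_def)
lemma morph_pm2: "morph M N f \<Longrightarrow> is_pmod N" by (simp add: morph_def)
lemma morph_act: "morph M N f \<Longrightarrow> h \<le> g \<Longrightarrow> x \<in> sp M h \<Longrightarrow>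
    f g (act M h (g - h) x) = act N h (g - h) (f h x)"
proof -
  assume a: "morph M N f" "h \<le> g" "x \<in> sp M h"
  have c: "\<forall>g s. s \<ge> 0 \<longrightarrow> (\<forall>x\<in>sp M g. f (g + s) (act M g s x) = act N g s (f g x))"
    using a(1) unfolding morph_def by blast
  have "f (h + (g - h)) (act M h (g - h) x) = act N h (g - h) (f h x)"
    using c[rule_format, of "g - h" x h] a by simp
  then show ?thesis by simp
qed
lemma morph_zero: "morph M N f \<Longrightarrow> f g 0 = 0"
  using lin_zero[of "sp M g" "f g"] morph_lin[of M N f g] pmod_sub[of M g] morph_pm1[of M N f] by blast
lemma morph_add: "morph M N f \<Longrightarrow> x \<in> sp M g \<Longrightarrow> y \<in> sp M g \<Longrightarrow> f g (x + y) = f g x + f g y"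
  using lin_add[of "sp M g" "f g" x y] morph_lin[of M N f g] by blast
lemma morph_diff: "morph M N f \<Longrightarrow> x \<in> sp M g \<Longrightarrow> y \<in> sp M g \<Longrightarrow> f g (x - y) = f g x - f g y"
  using lin_diff[of "sp M g" "f g" x y] morph_lin[of M N f g] pmod_sub[of M g] morph_pm1[of M N f] by blast
lemma morph_scale: "morph M N f \<Longrightarrow> x \<in> sp M g \<Longrightarrow> f g (vscale c x) = vscale c (f g x)"
  using lin_scale[of "sp M g" "f g" x c] morph_lin[of M N f g] by blast

lemma prec_span: "prec M g = V.span (\<Union>h\<in>{h. h < g}. act M h (g - h) ` sp M h)"
  by (simp add: prec_def lin_span_eq)

lemma prec_subspace: "V.subspace (prec M g)"
  by (simp add: prec_span)

lemma prec_sub: "is_pmod M \<Longrightarrow> prec M g \<subseteq> sp M g"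
  unfolding prec_span by (rule V.span_minimal) (auto intro: act_in pmod_sub)

lemma prec_act: "h < g \<Longrightarrow> y \<in> sp M h \<Longrightarrow> act M h (g - h) y \<in> prec M g"
  unfolding prec_span by (rule V.span_base) auto

lemma prec_rep:
  assumes M: "is_pmod M" and x: "x \<in> prec M g" and h0: "h0 < g"
  shows "\<exists>h y. h0 \<le> h \<and> h < g \<and> y \<in> sp M h \<and> x = act M h (g - h) y"
proof -
  let ?Q = "{x. \<forall>h0<g. \<exists>h y. h0 \<le> h \<and> h < g \<and> y \<in> sp M h \<and> x = act M h (g - h) y}"
  have sub: "V.subspace ?Q"
  proof (rule V.subspaceI)
    show "0 \<in> ?Q"
    proof (safe)
      fix h0 assume "h0 < g"
      then show "\<exists>h y. h0 \<le> h \<and> h < g \<and> y \<in> sp M h \<and> 0 = act M h (g - h) y"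
        using act_zero[OF M] V.subspace_0[OF pmod_sub[OF M]]
        by (intro exI[of _ h0] exI[of _ 0]) auto
    qed
  next
    fix x y assume x: "x \<in> ?Q" and y: "y \<in> ?Q"
    show "x + y \<in> ?Q"
    proof (safe)
      fix h0 assume "h0 < g"
      with x obtain h1 y1 where 1: "h0 \<le> h1" "h1 < g" "y1 \<in> sp M h1" "x = act M h1 (g - h1) y1" by blast
      with y obtain h2 y2 where 2: "h1 \<le> h2" "h2 < g" "y2 \<in> sp M h2" "y = act M h2 (g - h2) y2" by blast
      have a: "act M h1 (h2 - h1) y1 \<in> sp M h2" using act_in[OF M] 1 2 by auto
      show "\<exists>h ya. h0 \<le> h \<and> h < g \<and> ya \<in> sp M h \<and> x + y = act M h (g - h) ya"
        apply (intro exI[of _ h2] exI[of _ "act M h1 (h2 - h1) y1 + y2"])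
        using 1 2 a act_add[OF M, of h2 g] act_comp[OF M, of h1 h2 g y1]
          V.subspace_add[OF pmod_sub[OF M]] by auto
    qed
  next
    fix c x assume x: "x \<in> ?Q"
    show "vscale c x \<in> ?Q"
    proof (safe)
      fix h0 assume "h0 < g"
      with x obtain h1 y1 where 1: "h0 \<le> h1" "h1 < g" "y1 \<in> sp M h1" "x = act M h1 (g - h1) y1" by blast
      then show "\<exists>h y. h0 \<le> h \<and> h < g \<and> y \<in> sp M h \<and> vscale c x = act M h (g - h) y"
        using act_scale[OF M, of h1 g y1 c] V.subspace_scale[OF pmod_sub[OF M]]
        by (intro exI[of _ h1] exI[of _ "vscale c y1"]) auto
    qed
  qed
  have gen: "(\<Union>h\<in>{h. h < g}. act M h (g - h) ` sp M h) \<subseteq> ?Q"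
  proof (safe)
    fix h y h0 assume h: "h < g" and y: "y \<in> sp M h" and h0: "h0 < g"
    define H where "H = max h h0"
    show "\<exists>h' y'. h0 \<le> h' \<and> h' < g \<and> y' \<in> sp M h' \<and> act M h (g - h) y = act M h' (g - h') y'"
      apply (intro exI[of _ H] exI[of _ "act M h (H - h) y"])
      using h h0 y act_in[OF M, of h H y] act_comp[OF M, of h H g y] by (auto simp: H_def)
  qed
  have "prec M g \<subseteq> ?Q" unfolding prec_span by (rule V.span_minimal[OF gen sub])
  then show ?thesis using x h0 by blast
qed

lemma prec_rep1:
  assumes M: "is_pmod M" and x: "x \<in> prec M g"
  obtains h y where "h < g" "y \<in> sp M h" "x = act M h (g - h) y"
  using prec_rep[OF M x, of "g - 1"] by auto

lemma morph_prec: "morph M N f \<Longrightarrow> x \<in> prec M g \<Longrightarrow> f g x \<in> prec N g"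
proof -
  assume a: "morph M N f" "x \<in> prec M g"
  obtain h y where h: "h < g" "y \<in> sp M h" "x = act M h (g - h) y"
    using prec_rep1[OF morph_pm1[OF a(1)] a(2)] by blast
  have "f g x = act N h (g - h) (f h y)" using morph_act[OF a(1), of h g y] h by simp
  then show ?thesis using prec_act[OF h(1) morph_in[OF a(1) h(2)]] by simp
qed

lemma free_basis_indep: "free_basis M J \<Longrightarrow> finite T \<Longrightarrow> T \<subseteq> {(b, a)\<in>J. a \<le> g} \<Longrightarrow>
   lincomb T c (\<lambda>(b, a). act M a (g - a) b) = vzero \<Longrightarrow> t \<in> T \<Longrightarrow> c t = 0"
  unfolding free_basis_def by blast
lemma free_basis_span: "free_basis M J \<Longrightarrow> x \<in> sp M g \<Longrightarrow> \<exists>T c. finite T \<and> T \<subseteq> {(b, a)\<in>J. a \<le> g} \<and>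
              x = lincomb T c (\<lambda>(b, a). act M a (g - a) b)"
  unfolding free_basis_def by blast
lemma free_basis_mem: "free_basis M J \<Longrightarrow> (b, a) \<in> J \<Longrightarrow> b \<in> sp M a"
  unfolding free_basis_def by blast

lemma free_inj0:
  assumes F: "is_free M" and s: "s \<ge> 0" and x: "x \<in> sp M h" and z: "act M h s x = 0"
  shows "x = 0"
proof -
  have M: "is_pmod M" using F by (simp add: is_free_def)
  obtain J where J: "free_basis M J" using F by (auto simp: is_free_def)
  from free_basis_span[OF J x] obtain T c where T: "finite T" "T \<subseteq> {(b, a)\<in>J. a \<le> h}"
    and xe: "x = lincomb T c (\<lambda>(b, a). act M a (h - a) b)"
    by blast
  have bin: "\<And>t. t \<in> T \<Longrightarrow> (case t of (b, a) \<Rightarrow> act M a (h - a) b) \<in> sp M h"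
    using T free_basis_mem[OF J] by (auto intro!: act_in[OF M])
  have "act M h s x = (\<Sum>t\<in>T. act M h s (vscale (c t) (case t of (b, a) \<Rightarrow> act M a (h - a) b)))"
    unfolding xe lincomb_eq
    using bin by (intro lin_sum[OF pmod_lin[OF M s] pmod_sub[OF M]] V.subspace_scale[OF pmod_sub[OF M]]) auto
  also have "\<dots> = (\<Sum>t\<in>T. vscale (c t) (case t of (b, a) \<Rightarrow> act M a (h + s - a) b))"
  proof (intro sum.cong refl)
    fix t assume t: "t \<in> T"
    obtain b a where ba: "t = (b, a)" by fastforce
    have b: "b \<in> sp M a" "a \<le> h" using T t free_basis_mem[OF J] ba by auto
    have "act M h s (act M a (h - a) b) = act M a (h + s - a) b"
      using act_comp[OF M, of a h "h + s" b] b s by simp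
    then show "act M h s (vscale (c t) (case t of (b, a) \<Rightarrow> act M a (h - a) b)) =
          vscale (c t) (case t of (b, a) \<Rightarrow> act M a (h + s - a) b)"
      using lin_scale[OF pmod_lin[OF M s] bin[OF t]] ba by simp
  qed
  finally have "lincomb T c (\<lambda>(b, a). act M a (h + s - a) b) = vzero"
    using z by (simp add: lincomb_eq vzero_eq)
  moreover have "T \<subseteq> {(b, a)\<in>J. a \<le> h + s}" using T s by auto
  ultimately have "\<forall>t\<in>T. c t = 0" using free_basis_indep[OF J T(1)] by blast
  then show ?thesis unfolding xe lincomb_eq by simp
qed

lemma free_inj:
  assumes F: "is_free M" and hg: "h \<le> g" and x: "x \<in> sp M h" and y: "y \<in> sp M h"
    and e: "act M h (g - h) x = act M h (g - h) y"
  shows "x = y"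
proof -
  have M: "is_pmod M" using F by (simp add: is_free_def)
  have "act M h (g - h) (x - y) = 0" using act_diff[OF M hg x y] e by simp
  then have "x - y = 0" using hg by (intro free_inj0[OF F _ V.subspace_diff[OF pmod_sub[OF M] x y]]) auto
  then show ?thesis by simp
qed


definition delta :: "nat \<Rightarrow> nat \<Rightarrow> 'k::field" where "delta i = (\<lambda>j. if j = i then 1 else 0)"

lemma vscale_app: "vscale c x i = c * x i" by (simp add: vscale_def)

lemma sum_vscale_app: "(\<Sum>t\<in>T. vscale (u t) (v t)) i = (\<Sum>t\<in>T. u t * v t i)"
  by (simp add: sum_fun_app vscale_app)

lemma delta_inj: "inj (delta :: nat \<Rightarrow> nat \<Rightarrow> 'k::field)"
  by (auto simp: inj_def delta_def fun_eq_iff)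

lemma delta_indep: "V.independent ((delta :: nat \<Rightarrow> nat \<Rightarrow> 'k::field) ` S)"
  unfolding V.independent_explicit_finite_subsets
proof (intro allI impI ballI)
  fix t :: "(nat \<Rightarrow> 'k) set" and u v
  assume t2: "t \<subseteq> delta ` S" and t1: "finite t" and s: "(\<Sum>v\<in>t. vscale (u v) v) = 0" and v: "v \<in> t"
  from t2 v obtain i where i: "v = delta i" by blast
  have "0 = (\<Sum>w\<in>t. vscale (u w) w) i" unfolding s by (rule zero_fun_apply[symmetric])
  also have "\<dots> = (\<Sum>w\<in>t. u w * w i)" by (rule sum_vscale_app)
  also have "\<dots> = u v * v i + (\<Sum>w\<in>t - {v}. u w * w i)" by (rule sum.remove[OF t1 v])
  finally have e0: "0 = u v * v i + (\<Sum>w\<in>t - {v}. u w * w i)" .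
  have "(\<Sum>w\<in>t - {v}. u w * w i) = 0"
  proof (rule sum.neutral, rule ballI)
    fix w assume w': "w \<in> t - {v}"
    then have w: "w \<in> t" "w \<noteq> v" by auto
    then obtain j where j: "w = delta j" using t2 by blast
    then have "j \<noteq> i" using w i by auto
    then show "u w * w i = 0" using j by (simp add: delta_def)
  qed
  moreover have "v i = 1" using i by (simp add: delta_def)
  ultimately show "u v = 0" using e0 by simp
qed

lemma delta_bound0: "finite B \<Longrightarrow> (delta::nat\<Rightarrow>nat\<Rightarrow>'k::field) ` S \<subseteq> V.span (phi ` B) \<Longrightarrow> card ((delta::nat\<Rightarrow>nat\<Rightarrow>'k) ` S) \<le> card (phi ` B)"
  using V.independent_span_bound[OF finite_imageI delta_indep] by blast

lemma delta_card: "card ((delta::nat\<Rightarrow>nat\<Rightarrow>'k::field) ` S) = card S"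
  by (rule card_image) (rule inj_on_subset[OF delta_inj], simp)

lemma delta_bound: "finite B \<Longrightarrow> (delta::nat\<Rightarrow>nat\<Rightarrow>'k::field) ` S \<subseteq> V.span (phi ` B) \<Longrightarrow> card S \<le> card (phi ` B)"
  using delta_bound0[of B S phi] delta_card[where 'k='k, of S] by linarith

lemma dim_lemma:
  fixes W U :: "('i \<Rightarrow> 'k::field) set" and phi :: "('i \<Rightarrow> 'k) \<Rightarrow> (nat \<Rightarrow> 'k)"
  assumes W: "V.subspace W" and UW: "U \<subseteq> W" and lin: "linear_on W phi"
    and img: "phi ` W = {v. \<forall>i. v i \<noteq> 0 \<longrightarrow> i \<in> S}"
    and ker: "{x\<in>W. phi x = 0} = U" and S: "finite S"
  shows "qfin W U \<and> qdim W U = card S"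
proof -
  have "\<forall>i\<in>S. \<exists>x\<in>W. phi x = delta i"
  proof
    fix i assume "i \<in> S"
    then have "delta i \<in> phi ` W" unfolding img by (auto simp: delta_def)
    then show "\<exists>x\<in>W. phi x = delta i" by auto
  qed
  then obtain xs where xs: "\<And>i. i \<in> S \<Longrightarrow> xs i \<in> W \<and> phi (xs i) = delta i" by metis
  define B0 where "B0 = xs ` S"
  have B0W: "B0 \<subseteq> W" using xs by (auto simp: B0_def)
  have finB0: "finite B0" using S by (simp add: B0_def)
  have cardB0: "card B0 \<le> card S" using S by (simp add: B0_def card_image_le)
  have spans: "W \<subseteq> V.span (U \<union> B0)"
  proof
    fix w assume w: "w \<in> W"
    define s where "s = (\<Sum>i\<in>S. vscale (phi w i) (xs i))"
    have sW: "s \<in> W" unfolding s_def using xs by (intro V.subspace_sum[OF W] V.subspace_scale[OF W]) auto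
    have "phi s = (\<Sum>i\<in>S. phi (vscale (phi w i) (xs i)))"
      unfolding s_def using xs by (intro lin_sum[OF lin W]) (auto intro: V.subspace_scale[OF W])
    also have "\<dots> = (\<Sum>i\<in>S. vscale (phi w i) (delta i))"
      using xs lin_scale[OF lin] by (intro sum.cong) auto
    also have "\<dots> = phi w"
    proof (rule ext)
      fix j
      have "(\<Sum>i\<in>S. vscale (phi w i) (delta i)) j = (\<Sum>i\<in>S. phi w i * delta i j)" by (rule sum_vscale_app)
      also have "\<dots> = (\<Sum>i\<in>S. if i = j then phi w j else 0)"
        by (intro sum.cong) (auto simp: delta_def)
      also have "\<dots> = phi w j"
      proof (cases "j \<in> S")
        case True then show ?thesis using S by (simp add: sum.delta')
      next
        case False
        have "phi w \<in> phi ` W" using w by auto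
        then have "phi w j = 0" using False unfolding img by auto
        then show ?thesis using False S by simp
      qed
      finally show "(\<Sum>i\<in>S. vscale (phi w i) (delta i)) j = phi w j" .
    qed
    finally have ps: "phi s = phi w" .
    have "phi (w - s) = 0" using lin_diff[OF lin W w sW] ps by simp
    then have "w - s \<in> U" using ker V.subspace_diff[OF W w sW] by blast
    then have "w - s \<in> V.span (U \<union> B0)" by (intro V.span_base) auto
    moreover have "s \<in> V.span (U \<union> B0)" unfolding s_def
      by (intro V.span_sum V.span_scale V.span_base) (auto simp: B0_def)
    ultimately have "(w - s) + s \<in> V.span (U \<union> B0)" by (rule V.span_add)
    then show "w \<in> V.span (U \<union> B0)" by simp
  qed
  have qf: "qfin W U" unfolding qfin_def lin_span_eq using finB0 B0W spans by (intro exI[of _ B0] conjI)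
  have ex: "\<exists>B. finite B \<and> card B = card B0 \<and> B \<subseteq> W \<and> W \<subseteq> lin_span (U \<union> B)"
    unfolding lin_span_eq using finB0 B0W spans by (intro exI[of _ B0] conjI refl)
  have le: "qdim W U \<le> card S"
  proof -
    have "qdim W U \<le> card B0" unfolding qdim_def by (rule Least_le) (rule ex)
    then show ?thesis using cardB0 by linarith
  qed
  have lower: "card S \<le> card B" if B: "finite B" "B \<subseteq> W" "W \<subseteq> V.span (U \<union> B)" for B
  proof -
    have "delta ` S \<subseteq> V.span (phi ` B)"
    proof clarify
      fix i assume i: "i \<in> S"
      have "xs i \<in> V.span (U \<union> B)" using xs[OF i] B by auto
      then have "phi (xs i) \<in> V.span (phi ` (U \<union> B))"
        using B UW by (intro lin_span_sub[OF W lin]) auto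
      also have "\<dots> \<subseteq> V.span (insert 0 (phi ` B))"
        using ker by (intro V.span_mono) auto
      also have "\<dots> = V.span (phi ` B)" by (rule V.span_insert_0)
      finally show "delta i \<in> V.span (phi ` B)" using xs[OF i] by simp
    qed
    then have "card S \<le> card (phi ` B)" by (rule delta_bound[OF B(1)])
    also have "\<dots> \<le> card B" using B(1) by (rule card_image_le)
    finally show ?thesis .
  qed
  have "\<exists>B. finite B \<and> card B = qdim W U \<and> B \<subseteq> W \<and> W \<subseteq> lin_span (U \<union> B)"
    unfolding qdim_def by (rule LeastI_ex, rule exI[of _ "card B0"], rule ex)
  then obtain B1 where B1: "finite B1" "card B1 = qdim W U" "B1 \<subseteq> W" "W \<subseteq> V.span (U \<union> B1)"
    unfolding lin_span_eq by blast
  have "card S \<le> qdim W U" using lower[OF B1(1,3,4)] B1(2) by simp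
  then show ?thesis using le qf by simp
qed

lemma qdim_zero: "W \<subseteq> V.span U \<Longrightarrow> qdim W U = 0"
  unfolding qdim_def lin_span_eq
  by (rule Least_eq_0) (auto intro!: exI[of _ "{}"])


lemma dep_lemma:
  fixes m :: "'a \<Rightarrow> ('i \<Rightarrow> 'k::field)"
  assumes C: "finite C" "card C = Suc n" and mP: "\<forall>x\<in>C. m x \<in> V.span P" and P: "finite P" "card P \<le> n"
  shows "\<exists>c. (\<exists>x\<in>C. c x \<noteq> 0) \<and> (\<Sum>x\<in>C. vscale (c x) (m x)) = 0"
proof (cases "inj_on m C")
  case False
  then obtain x y where xy: "x \<in> C" "y \<in> C" "x \<noteq> y" "m x = m y" unfolding inj_on_def by blast
  define c :: "'a \<Rightarrow> 'k" where "c = (\<lambda>z. if z = x then 1 else if z = y then -1 else 0)"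
  have "(\<Sum>z\<in>C. vscale (c z) (m z)) = (\<Sum>z\<in>{x, y}. vscale (c z) (m z))"
    by (rule sum.mono_neutral_right) (use C xy in \<open>auto simp: c_def V.scale_zero_left\<close>)
  also have "\<dots> = vscale 1 (m x) + vscale (-1) (m y)" using xy by (simp add: c_def)
  also have "\<dots> = 0" using xy by (simp add: neg_vscale)
  finally show ?thesis using xy by (intro exI[of _ c]) (auto simp: c_def)
next
  case True
  have "card (m ` C) = Suc n" using True C by (simp add: card_image)
  have sub: "m ` C \<subseteq> V.span P" using mP by blast
  have "\<not> V.independent (m ` C)"
  proof
    assume ind: "V.independent (m ` C)"
    have "card (m ` C) \<le> card P" using V.independent_span_bound[OF P(1) ind sub] by simp
    then show False using \<open>card (m ` C) = Suc n\<close> P by simp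
  qed
  then obtain t u where t: "finite t" "t \<subseteq> m ` C" "(\<Sum>v\<in>t. vscale (u v) v) = 0" and v: "\<exists>v\<in>t. u v \<noteq> 0"
    unfolding V.dependent_explicit by blast
  define c where "c = (\<lambda>z. if m z \<in> t then u (m z) else 0)"
  have "(\<Sum>x\<in>C. vscale (c x) (m x)) = (\<Sum>v\<in>m ` C. vscale (if v \<in> t then u v else 0) v)"
    using sum.reindex[OF True, of "\<lambda>v. vscale (if v \<in> t then u v else 0) v"] by (simp add: c_def)
  also have "\<dots> = (\<Sum>v\<in>t. vscale (if v \<in> t then u v else 0) v)"
    by (rule sum.mono_neutral_right) (use C t in \<open>auto simp: V.scale_zero_left\<close>)
  also have "\<dots> = 0" using t(3) by simp
  finally have s: "(\<Sum>x\<in>C. vscale (c x) (m x)) = 0" .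
  from v t obtain x where "x \<in> C" "c x \<noteq> 0" by (auto simp: c_def)
  then show ?thesis using s by blast
qed

lemma qfin_bound:
  fixes W U :: "('i \<Rightarrow> 'k::field) set"
  assumes W: "V.subspace W" and UW: "U \<subseteq> W" and U: "V.subspace U"
    and dep: "\<And>C. C \<subseteq> W \<Longrightarrow> finite C \<Longrightarrow> card C = Suc n \<Longrightarrow>
                 \<exists>c. (\<exists>x\<in>C. c x \<noteq> 0) \<and> (\<Sum>x\<in>C. vscale (c x) x) \<in> U"
  shows "qfin W U"
proof -
  obtain Bu where Bu: "{} \<subseteq> Bu" "Bu \<subseteq> U" "V.independent Bu" "U \<subseteq> V.span Bu"
    by (rule V.maximal_independent_subset_extend[OF empty_subsetI V.independent_empty])
  obtain Bw where Bw: "Bu \<subseteq> Bw" "Bw \<subseteq> W" "V.independent Bw" "W \<subseteq> V.span Bw"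
    by (rule V.maximal_independent_subset_extend[OF subset_trans[OF Bu(2) UW] Bu(3)])
  define C where "C = Bw - Bu"
  have finC: "finite C"
  proof (rule ccontr)
    assume "infinite C"
    then have "\<exists>B. finite B \<and> card B = Suc n \<and> B \<subseteq> C" by (rule infinite_arbitrarily_large)
    then obtain C' where C': "C' \<subseteq> C" "finite C'" "card C' = Suc n" by blast
    then obtain c where c: "\<exists>x\<in>C'. c x \<noteq> 0" "(\<Sum>x\<in>C'. vscale (c x) x) \<in> U"
    proof -
      have "C' \<subseteq> W" using C' Bw(2) unfolding C_def by blast
      then show ?thesis using dep[of C'] C' that by blast
    qed
    then have "(\<Sum>x\<in>C'. vscale (c x) x) \<in> V.span Bu" using Bu by blast
    then obtain T r where T: "finite T" "T \<subseteq> Bu" "(\<Sum>x\<in>C'. vscale (c x) x) = (\<Sum>a\<in>T. vscale (r a) a)"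
      unfolding V.span_explicit by blast
    have disj: "C' \<inter> T = {}" using C' T C_def by blast
    define u where "u = (\<lambda>x. if x \<in> C' then c x else - r x)"
    have "(\<Sum>x\<in>C' \<union> T. vscale (u x) x) = (\<Sum>x\<in>C'. vscale (u x) x) + (\<Sum>x\<in>T. vscale (u x) x)"
      by (rule sum.union_disjoint) (use C' T disj in auto)
    also have "(\<Sum>x\<in>C'. vscale (u x) x) = (\<Sum>x\<in>C'. vscale (c x) x)" by (simp add: u_def)
    also have "(\<Sum>x\<in>T. vscale (u x) x) = (\<Sum>x\<in>T. vscale (- r x) x)"
      using disj by (intro sum.cong) (auto simp: u_def)
    also have "\<dots> = - (\<Sum>x\<in>T. vscale (r x) x)" by (simp add: V.scale_minus_left sum_negf)
    finally have "(\<Sum>x\<in>C' \<union> T. vscale (u x) x) = (\<Sum>x\<in>C'. vscale (c x) x) + - (\<Sum>x\<in>T. vscale (r x) x)" .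
    also have "\<dots> = 0" unfolding T(3) by (rule add.right_inverse)
    finally have "(\<Sum>x\<in>C' \<union> T. vscale (u x) x) = 0" .
    moreover have "C' \<union> T \<subseteq> Bw" using C' T Bw C_def by blast
    moreover have "\<exists>x\<in>C' \<union> T. u x \<noteq> 0" using c(1) by (auto simp: u_def)
    ultimately have "V.dependent Bw" unfolding V.dependent_explicit
      using C'(2) T(1) by (intro exI[of _ "C' \<union> T"] exI[of _ u]) auto
    then show False using Bw(3) by blast
  qed
  have "W \<subseteq> V.span (U \<union> C)"
  proof -
    have "Bw \<subseteq> U \<union> C" using Bu C_def by blast
    then have "V.span Bw \<subseteq> V.span (U \<union> C)" by (rule V.span_mono)
    then show ?thesis using Bw(4) by blast
  qed
  moreover have "C \<subseteq> W" using Bw C_def by blast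
  ultimately show ?thesis unfolding qfin_def lin_span_eq using finC by blast
qed


lemma lin_lincomb: "linear_on S f \<Longrightarrow> V.subspace S \<Longrightarrow> (\<And>x. x \<in> C \<Longrightarrow> v x \<in> S) \<Longrightarrow>
   f (\<Sum>x\<in>C. vscale (c x) (v x)) = (\<Sum>x\<in>C. vscale (c x) (f (v x)))"
proof -
  assume a: "linear_on S f" "V.subspace S" "\<And>x. x \<in> C \<Longrightarrow> v x \<in> S"
  have "f (\<Sum>x\<in>C. vscale (c x) (v x)) = (\<Sum>x\<in>C. f (vscale (c x) (v x)))"
    using a by (intro lin_sum[OF a(1,2)] V.subspace_scale) auto
  also have "\<dots> = (\<Sum>x\<in>C. vscale (c x) (f (v x)))"
    using a lin_scale[OF a(1)] by (intro sum.cong) auto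
  finally show ?thesis .
qed

lemma sub_lincomb: "V.subspace S \<Longrightarrow> (\<And>x. x \<in> C \<Longrightarrow> v x \<in> S) \<Longrightarrow> (\<Sum>x\<in>C. vscale (c x) (v x)) \<in> S"
  by (intro V.subspace_sum V.subspace_scale) auto

locale resol =
  fixes M :: "('i, 'k::field) pmod" and F :: "nat \<Rightarrow> ('j, 'k) pmod"
    and d :: "nat \<Rightarrow> real \<Rightarrow> ('j \<Rightarrow> 'k) \<Rightarrow> ('j \<Rightarrow> 'k)" and e :: "real \<Rightarrow> ('j \<Rightarrow> 'k) \<Rightarrow> ('i \<Rightarrow> 'k)"
  assumes fr: "free_resolution M F d e"
begin

lemma Ffree: "is_free (F i)" using fr by (simp add: free_resolution_def)
lemma Fpm: "is_pmod (F i)" using Ffree by (simp add: is_free_def)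
lemma dm: "morph (F (Suc i)) (F i) (d i)" using fr by (simp add: free_resolution_def)
lemma dm1: "morph (F 1) (F 0) (d 0)" using dm[of 0] by simp
lemma em: "morph (F 0) M e" using fr by (simp add: free_resolution_def)
lemma Mpm: "is_pmod M" using em by (simp add: morph_def)
lemma e_surj: "e g ` sp (F 0) g = sp M g" using fr by (simp add: free_resolution_def)
lemma ker_e: "{x\<in>sp (F 0) g. e g x = 0} = d 0 g ` sp (F 1) g"
  using fr by (simp add: free_resolution_def vzero_eq)
lemma ker_d: "{x\<in>sp (F (Suc i)) g. d i g x = 0} = d (Suc i) g ` sp (F (Suc (Suc i))) g"
  using fr by (simp add: free_resolution_def vzero_eq)

lemma e_d0: "z \<in> sp (F 1) g \<Longrightarrow> e g (d 0 g z) = 0"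
  using ker_e[of g] by blast
lemma d_d: "z \<in> sp (F (Suc (Suc i))) g \<Longrightarrow> d i g (d (Suc i) g z) = 0"
  using ker_d[of i g] by blast
lemma e_ker: "x \<in> sp (F 0) g \<Longrightarrow> e g x = 0 \<Longrightarrow> \<exists>z\<in>sp (F 1) g. x = d 0 g z"
  using ker_e[of g] by blast
lemma d_ker: "x \<in> sp (F (Suc i)) g \<Longrightarrow> d i g x = 0 \<Longrightarrow> \<exists>z\<in>sp (F (Suc (Suc i))) g. x = d (Suc i) g z"
  using ker_d[of i g] by blast
lemma d_ker1: "x \<in> sp (F 1) g \<Longrightarrow> d 0 g x = 0 \<Longrightarrow> \<exists>z\<in>sp (F 2) g. x = d 1 g z"
  using d_ker[of x 0 g] by (simp add: numeral_2_eq_2)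

lemma Fsub: "V.subspace (sp (F i) g)" by (rule pmod_sub[OF Fpm])

lemma cyc0: "cyc F d g 0 = sp (F 0) g" by (simp add: cyc_def)
lemma cycS: "cyc F d g (Suc k) = {x\<in>sp (F (Suc k)) g. d k g x \<in> prec (F k) g}" by (simp add: cyc_def)
lemma bnd_span: "bnd F d g i = V.span (d i g ` sp (F (Suc i)) g \<union> prec (F i) g)"
  by (simp add: bnd_def lin_span_eq)

lemma cyc_subspace: "V.subspace (cyc F d g i)"
proof (cases i)
  case 0 then show ?thesis by (simp add: cyc0 Fsub)
next
  case (Suc k)
  show ?thesis unfolding Suc cycS
  proof (rule V.subspaceI)
    show "0 \<in> {x \<in> sp (F (Suc k)) g. d k g x \<in> prec (F k) g}"
      using V.subspace_0[OF Fsub] morph_zero[OF dm] V.subspace_0[OF prec_subspace] by simp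
  next
    fix x y assume x: "x \<in> {x \<in> sp (F (Suc k)) g. d k g x \<in> prec (F k) g}"
      and y: "y \<in> {x \<in> sp (F (Suc k)) g. d k g x \<in> prec (F k) g}"
    then have a: "x \<in> sp (F (Suc k)) g" "d k g x \<in> prec (F k) g" "y \<in> sp (F (Suc k)) g" "d k g y \<in> prec (F k) g"
      by auto
    have "d k g (x + y) = d k g x + d k g y" by (rule morph_add[OF dm a(1) a(3)])
    then show "x + y \<in> {x \<in> sp (F (Suc k)) g. d k g x \<in> prec (F k) g}"
      using V.subspace_add[OF Fsub a(1) a(3)] V.subspace_add[OF prec_subspace a(2) a(4)] by simp
  next
    fix c x assume x: "x \<in> {x \<in> sp (F (Suc k)) g. d k g x \<in> prec (F k) g}"
    then have a: "x \<in> sp (F (Suc k)) g" "d k g x \<in> prec (F k) g" by auto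
    have "d k g (vscale c x) = vscale c (d k g x)" by (rule morph_scale[OF dm a(1)])
    then show "vscale c x \<in> {x \<in> sp (F (Suc k)) g. d k g x \<in> prec (F k) g}"
      using V.subspace_scale[OF Fsub a(1)] V.subspace_scale[OF prec_subspace a(2)] by simp
  qed
qed

lemma bnd_sub: "bnd F d g i \<subseteq> cyc F d g i"
  unfolding bnd_span
proof (rule V.span_minimal[OF _ cyc_subspace], safe)
  fix z assume z: "z \<in> sp (F (Suc i)) g"
  show "d i g z \<in> cyc F d g i"
  proof (cases i)
    case 0 then show ?thesis using morph_in[OF dm] z by (simp add: cyc0)
  next
    case (Suc k)
    have "d k g (d (Suc k) g z) = 0" using d_d z Suc by simp
    then show ?thesis using Suc morph_in[OF dm] z V.subspace_0[OF prec_subspace] by (simp add: cycS)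
  qed
next
  fix p assume p: "p \<in> prec (F i) g"
  show "p \<in> cyc F d g i"
  proof (cases i)
    case 0 then show ?thesis using prec_sub[OF Fpm] p by (auto simp: cyc0)
  next
    case (Suc k)
    then show ?thesis using prec_sub[OF Fpm] p morph_prec[OF dm] by (auto simp: cycS)
  qed
qed

lemma W1_rep: "x \<in> cyc F d g 1 \<Longrightarrow> h0 < g \<Longrightarrow>
    \<exists>h y. h0 \<le> h \<and> h < g \<and> y \<in> sp (F 0) h \<and> d 0 g x = act (F 0) h (g - h) y"
  using prec_rep[OF Fpm] by (simp add: cycS)

lemma U0_of_ker: "x \<in> sp (F 0) g \<Longrightarrow> e g x = 0 \<Longrightarrow> x \<in> bnd F d g 0"
proof -
  assume a: "x \<in> sp (F 0) g" "e g x = 0"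
  obtain z where z: "z \<in> sp (F 1) g" "x = d 0 g z" using e_ker[OF a] by blast
  have "x \<in> d 0 g ` sp (F (Suc 0)) g \<union> prec (F 0) g" using z by simp
  then show ?thesis unfolding bnd_span by (rule V.span_base)
qed

lemma U1_of_ker:
  assumes x: "x \<in> sp (F 1) g" and h: "h < g" and y: "y \<in> sp (F 0) h"
    and r: "d 0 g x = act (F 0) h (g - h) y" and ey: "e h y = 0"
  shows "x \<in> bnd F d g 1"
proof -
  obtain q where q: "q \<in> sp (F 1) h" "y = d 0 h q" using e_ker[OF y ey] by blast
  define a where "a = act (F 1) h (g - h) q"
  have a: "a \<in> sp (F 1) g" unfolding a_def using act_in[OF Fpm] q h by simp
  have "d 0 g a = d 0 g x" unfolding a_def r using morph_act[OF dm1, of h g q] q h by simp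
  then have "d 0 g (x - a) = 0" using morph_diff[OF dm1 x a] by simp
  then obtain w where w: "w \<in> sp (F 2) g" "x - a = d 1 g w"
    using d_ker1[OF V.subspace_diff[OF Fsub x a]] by blast
  have "x - a \<in> bnd F d g 1" unfolding bnd_span w(2)
    by (rule V.span_base) (use w in \<open>auto simp: numeral_2_eq_2\<close>)
  moreover have "a \<in> bnd F d g 1" unfolding bnd_span
    by (rule V.span_base) (use h q in \<open>auto simp: a_def intro: prec_act\<close>)
  ultimately have "(x - a) + a \<in> bnd F d g 1" unfolding bnd_span by (rule V.span_add)
  then show ?thesis by simp
qed

lemma common_rep:
  assumes C: "finite C" "C \<subseteq> cyc F d g 1"
  shows "\<exists>H yy. H < g \<and> (\<forall>x\<in>C. yy x \<in> sp (F 0) H \<and> d 0 g x = act (F 0) H (g - H) (yy x))"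
proof -
  have "\<forall>x\<in>C. \<exists>hy. fst hy < g \<and> snd hy \<in> sp (F 0) (fst hy) \<and> d 0 g x = act (F 0) (fst hy) (g - fst hy) (snd hy)"
  proof
    fix x assume "x \<in> C"
    then obtain h y where "h < g" "y \<in> sp (F 0) h" "d 0 g x = act (F 0) h (g - h) y"
      using W1_rep[of x g "g - 1"] C by auto
    then show "\<exists>hy. fst hy < g \<and> snd hy \<in> sp (F 0) (fst hy) \<and> d 0 g x = act (F 0) (fst hy) (g - fst hy) (snd hy)"
      by (intro exI[of _ "(h, y)"]) simp
  qed
  then obtain hy where hy: "\<And>x. x \<in> C \<Longrightarrow> fst (hy x) < g \<and> snd (hy x) \<in> sp (F 0) (fst (hy x)) \<and>
        d 0 g x = act (F 0) (fst (hy x)) (g - fst (hy x)) (snd (hy x))"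
    by metis
  define H where "H = Max (insert (g - 1) ((\<lambda>x. fst (hy x)) ` C))"
  have Hg: "H < g" unfolding H_def using C hy by (subst Max_less_iff) auto
  have hH: "fst (hy x) \<le> H" if "x \<in> C" for x unfolding H_def using C that by (intro Max_ge) auto
  define yy where "yy x = act (F 0) (fst (hy x)) (H - fst (hy x)) (snd (hy x))" for x
  show ?thesis
  proof (intro exI[of _ H] exI[of _ yy] conjI ballI Hg)
    fix x assume x: "x \<in> C"
    show "yy x \<in> sp (F 0) H" unfolding yy_def using act_in[OF Fpm] hy[OF x] hH[OF x] by simp
    show "d 0 g x = act (F 0) H (g - H) (yy x)" unfolding yy_def
      using act_comp[OF Fpm, of "fst (hy x)" H g "snd (hy x)"] hy[OF x] hH[OF x] Hg by simp
  qed
qed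

lemma cyc_high:
  assumes x: "x \<in> cyc F d g (Suc (Suc k))"
  shows "x \<in> bnd F d g (Suc (Suc k))"
proof -
  have xs: "x \<in> sp (F (Suc (Suc k))) g" and xp: "d (Suc k) g x \<in> prec (F (Suc k)) g"
    using x by (auto simp: cyc_def)
  obtain h y where h: "h < g" "y \<in> sp (F (Suc k)) h" "d (Suc k) g x = act (F (Suc k)) h (g - h) y"
    using prec_rep1[OF Fpm xp] by blast
  have "d k g (d (Suc k) g x) = 0" using d_d[OF xs] .
  then have "act (F k) h (g - h) (d k h y) = act (F k) h (g - h) 0"
    using morph_act[OF dm, of h g y] h act_zero[OF Fpm, of h g] by simp
  then have "d k h y = 0"
    using free_inj[OF Ffree[of k], of h g "d k h y" 0] h morph_in[OF dm] V.subspace_0[OF Fsub] by simp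
  then obtain z where z: "z \<in> sp (F (Suc (Suc k))) h" "y = d (Suc k) h z"
    using d_ker[OF h(2)] by blast
  define a where "a = act (F (Suc (Suc k))) h (g - h) z"
  have a: "a \<in> sp (F (Suc (Suc k))) g" unfolding a_def using act_in[OF Fpm] z h by simp
  have "d (Suc k) g a = d (Suc k) g x"
    unfolding a_def using morph_act[OF dm, of h g z] z h by simp
  then have "d (Suc k) g (x - a) = 0" using morph_diff[OF dm xs a] by simp
  then obtain w where w: "w \<in> sp (F (Suc (Suc (Suc k)))) g" "x - a = d (Suc (Suc k)) g w"
    using d_ker[OF V.subspace_diff[OF Fsub xs a]] by blast
  have "x - a \<in> bnd F d g (Suc (Suc k))" unfolding bnd_def lin_span_eq w(2)
    by (rule V.span_base) (use w in blast)
  moreover have "a \<in> bnd F d g (Suc (Suc k))" unfolding bnd_def lin_span_eq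
    by (rule V.span_base) (use h z in \<open>auto simp: a_def intro: prec_act\<close>)
  ultimately have "(x - a) + a \<in> bnd F d g (Suc (Suc k))" unfolding bnd_def lin_span_eq
    by (rule V.span_add)
  then show ?thesis by simp
qed


lemma qfin0:
  assumes bd: "\<And>h. \<exists>P. finite P \<and> card P \<le> n \<and> sp M h \<subseteq> V.span P"
  shows "qfin (cyc F d g 0) (bnd F d g 0)"
proof (rule qfin_bound[OF cyc_subspace bnd_sub])
  show "V.subspace (bnd F d g 0)" by (simp add: bnd_span)
next
  fix C assume C: "C \<subseteq> cyc F d g 0" "finite C" "card C = Suc n"
  obtain P where P: "finite P" "card P \<le> n" "sp M g \<subseteq> V.span P" using bd by blast
  have "\<forall>x\<in>C. e g x \<in> V.span P" using C P morph_in[OF em] by (auto simp: cyc0)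
  then obtain c where c: "\<exists>x\<in>C. c x \<noteq> 0" "(\<Sum>x\<in>C. vscale (c x) (e g x)) = 0"
    using dep_lemma[OF C(2,3) _ P(1,2)] by blast
  have Cs: "\<And>x. x \<in> C \<Longrightarrow> x \<in> sp (F 0) g" using C by (auto simp: cyc0)
  have zs: "(\<Sum>x\<in>C. vscale (c x) x) \<in> sp (F 0) g" by (rule sub_lincomb[OF Fsub Cs])
  have "e g (\<Sum>x\<in>C. vscale (c x) x) = (\<Sum>x\<in>C. vscale (c x) (e g x))"
    by (rule lin_lincomb[OF morph_lin[OF em] Fsub Cs])
  then have "e g (\<Sum>x\<in>C. vscale (c x) x) = 0" using c by simp
  then show "\<exists>c. (\<exists>x\<in>C. c x \<noteq> 0) \<and> (\<Sum>x\<in>C. vscale (c x) x) \<in> bnd F d g 0"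
    using U0_of_ker[OF zs] c(1) by blast
qed

lemma qfin1:
  assumes bd: "\<And>h. \<exists>P. finite P \<and> card P \<le> n \<and> sp M h \<subseteq> V.span P"
  shows "qfin (cyc F d g 1) (bnd F d g 1)"
proof (rule qfin_bound[OF cyc_subspace bnd_sub])
  show "V.subspace (bnd F d g 1)" by (simp add: bnd_span)
next
  fix C assume C: "C \<subseteq> cyc F d g 1" "finite C" "card C = Suc n"
  obtain H yy where H: "H < g" and yy: "\<And>x. x \<in> C \<Longrightarrow> yy x \<in> sp (F 0) H \<and> d 0 g x = act (F 0) H (g - H) (yy x)"
    using common_rep[OF C(2,1)] by blast
  obtain P where P: "finite P" "card P \<le> n" "sp M H \<subseteq> V.span P" using bd by blast
  have "\<forall>x\<in>C. e H (yy x) \<in> V.span P" using yy P morph_in[OF em] by blast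
  then obtain c where c: "\<exists>x\<in>C. c x \<noteq> 0" "(\<Sum>x\<in>C. vscale (c x) (e H (yy x))) = 0"
    using dep_lemma[where m="\<lambda>x. e H (yy x)", OF C(2,3) _ P(1,2)] by blast
  have Cs: "\<And>x. x \<in> C \<Longrightarrow> x \<in> sp (F 1) g" using C by (auto simp: cycS)
  have ys: "\<And>x. x \<in> C \<Longrightarrow> yy x \<in> sp (F 0) H" using yy by blast
  have zs: "(\<Sum>x\<in>C. vscale (c x) x) \<in> sp (F 1) g" by (rule sub_lincomb[OF Fsub Cs])
  have ysum: "(\<Sum>x\<in>C. vscale (c x) (yy x)) \<in> sp (F 0) H" by (rule sub_lincomb[OF Fsub ys])
  have "d 0 g (\<Sum>x\<in>C. vscale (c x) x) = (\<Sum>x\<in>C. vscale (c x) (d 0 g x))"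
    by (rule lin_lincomb[OF morph_lin[OF dm1] Fsub Cs])
  also have "\<dots> = (\<Sum>x\<in>C. vscale (c x) (act (F 0) H (g - H) (yy x)))"
    using yy by (intro sum.cong) auto
  also have "\<dots> = act (F 0) H (g - H) (\<Sum>x\<in>C. vscale (c x) (yy x))"
    using H by (intro lin_lincomb[OF pmod_lin[OF Fpm] Fsub ys, symmetric]) auto
  finally have r: "d 0 g (\<Sum>x\<in>C. vscale (c x) x) = act (F 0) H (g - H) (\<Sum>x\<in>C. vscale (c x) (yy x))" .
  have "e H (\<Sum>x\<in>C. vscale (c x) (yy x)) = (\<Sum>x\<in>C. vscale (c x) (e H (yy x)))"
    by (rule lin_lincomb[OF morph_lin[OF em] Fsub ys])
  then have "e H (\<Sum>x\<in>C. vscale (c x) (yy x)) = 0" using c by simp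
  then show "\<exists>c. (\<exists>x\<in>C. c x \<noteq> 0) \<and> (\<Sum>x\<in>C. vscale (c x) x) \<in> bnd F d g 1"
    using U1_of_ker[OF zs H ysum r] c(1) by blast
qed

lemma crit:
  assumes bd: "\<And>h. \<exists>P. finite P \<and> card P \<le> n \<and> sp M h \<subseteq> V.span P"
  shows "critical_series F d"
  unfolding critical_series_def
proof (intro allI conjI)
  fix g i
  show "qfin (cyc F d g i) (bnd F d g i)"
  proof (cases i)
    case 0 then show ?thesis using qfin0[OF bd] by simp
  next
    case (Suc k)
    show ?thesis
    proof (cases k)
      case 0 then show ?thesis using qfin1[OF bd] Suc by simp
    next
      case (Suc k')
      have "cyc F d g i \<subseteq> bnd F d g i" using cyc_high \<open>i = Suc k\<close> Suc by blast
      then show ?thesis unfolding qfin_def lin_span_eq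
        by (intro exI[of _ "{}"]) (auto intro: V.span_base)
    qed
  qed
next
  fix g
  have "{i. \<not> cyc F d g i \<subseteq> bnd F d g i} \<subseteq> {0, 1}"
  proof
    fix i assume i: "i \<in> {i. \<not> cyc F d g i \<subseteq> bnd F d g i}"
    show "i \<in> {0, 1}"
    proof (rule ccontr)
      assume "i \<notin> {0, 1}"
      then obtain k where "i = Suc (Suc k)" by (metis insertCI nat.exhaust One_nat_def)
      then show False using i cyc_high by blast
    qed
  qed
  then show "finite {i. \<not> cyc F d g i \<subseteq> bnd F d g i}" by (rule finite_subset) simp
qed

end


definition restr :: "nat set \<Rightarrow> (nat \<Rightarrow> 'k::field) \<Rightarrow> (nat \<Rightarrow> 'k)" where
  "restr S v = (\<lambda>j. if j \<in> S then v j else 0)"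

lemma restr_add: "restr S (a + b) = restr S a + restr S b"
  by (simp add: restr_def fun_eq_iff plus_fun_apply)
lemma restr_scale: "restr S (vscale c a) = vscale c (restr S a)"
  by (simp add: restr_def fun_eq_iff vscale_def)
lemma restr_zero: "restr S 0 = 0"
  by (simp add: restr_def fun_eq_iff zero_fun_apply)

lemma R_sp: "sp (region_sum bars :: (nat, 'k::field) pmod) g =
   {v. \<forall>i. v i \<noteq> 0 \<longrightarrow> i < length bars \<and> fst (bars ! i) \<le> g \<and> g < fst (bars ! i) + snd (bars ! i)}"
  by (simp add: region_sum_def)
lemma R_act: "act (region_sum bars :: (nat, 'k::field) pmod) g s v =
   (\<lambda>i. if i < length bars \<and> g + s < fst (bars ! i) + snd (bars ! i) then v i else 0)"
  by (simp add: region_sum_def)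

locale resbar = resol M F d e for M :: "('i, 'k::field) pmod" and F d e +
  fixes bars :: "(real \<times> real) list" and f :: "real \<Rightarrow> ('i \<Rightarrow> 'k) \<Rightarrow> (nat \<Rightarrow> 'k)"
  assumes pos: "\<forall>(al, len)\<in>set bars. 0 < len"
    and fm: "morph M (region_sum bars :: (nat, 'k) pmod) f"
    and fb: "\<And>g. bij_betw (f g) (sp M g) (sp (region_sum bars :: (nat, 'k) pmod) g)"
begin

abbreviation RR :: "(nat, 'k) pmod" where "RR \<equiv> region_sum bars"
definition al where "al j = fst (bars ! j)"
definition en where "en j = fst (bars ! j) + snd (bars ! j)"
definition S0 where "S0 g = {j. j < length bars \<and> al j = g}"
definition S1 where "S1 g = {j. j < length bars \<and> en j = g}"

lemma posj: "j < length bars \<Longrightarrow> al j < en j"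
proof -
  assume j: "j < length bars"
  obtain a l where bj: "bars ! j = (a, l)" by (cases "bars ! j")
  have "(a, l) \<in> set bars" using nth_mem[OF j] bj by simp
  then have "0 < l" using pos by blast
  then show ?thesis using bj by (simp add: al_def en_def)
qed

lemma Rsp: "sp RR g = {v. \<forall>i. v i \<noteq> 0 \<longrightarrow> i < length bars \<and> al i \<le> g \<and> g < en i}"
  by (simp add: R_sp al_def en_def)
lemma Ract: "act RR g s v = (\<lambda>i. if i < length bars \<and> g + s < en i then v i else 0)"
  by (simp add: R_act en_def)

lemma f_inj0: "m \<in> sp M g \<Longrightarrow> f g m = 0 \<Longrightarrow> m = 0"
proof -
  assume a: "m \<in> sp M g" "f g m = 0"
  have "f g 0 = 0" by (rule morph_zero[OF fm])
  moreover have "0 \<in> sp M g" by (rule V.subspace_0[OF pmod_sub[OF Mpm]])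
  ultimately show "m = 0" using inj_onD[OF bij_betw_imp_inj_on[OF fb[of g]], of m 0] a by simp
qed

lemma f_inj: "m \<in> sp M g \<Longrightarrow> m' \<in> sp M g \<Longrightarrow> f g m = f g m' \<Longrightarrow> m = m'"
  using inj_onD[OF bij_betw_imp_inj_on[OF fb[of g]], of m m'] by simp

lemma f_surj: "v \<in> sp RR g \<Longrightarrow> \<exists>m\<in>sp M g. f g m = v"
proof -
  assume v: "v \<in> sp RR g"
  have "f g ` sp M g = sp RR g" using bij_betw_imp_surj_on[OF fb[of g]] .
  then have "v \<in> f g ` sp M g" using v by simp
  then show ?thesis by (elim imageE) (rule bexI, rule sym)
qed

lemma fe_in: "y \<in> sp (F 0) h \<Longrightarrow> f h (e h y) \<in> sp RR h"
  by (rule morph_in[OF fm], rule morph_in[OF em])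

lemma lift: "v \<in> sp RR h \<Longrightarrow> \<exists>y\<in>sp (F 0) h. f h (e h y) = v"
proof -
  assume v: "v \<in> sp RR h"
  obtain m where m: "m \<in> sp M h" "f h m = v" using f_surj[OF v] by blast
  have "m \<in> e h ` sp (F 0) h" using m(1) e_surj[of h] by simp
  then obtain y where y: "y \<in> sp (F 0) h" "e h y = m" by (elim imageE) (rule that, assumption, rule sym)
  show ?thesis using m y by (intro bexI[of _ y]) simp_all
qed

lemma fe_act: "h \<le> g \<Longrightarrow> y \<in> sp (F 0) h \<Longrightarrow> f g (e g (act (F 0) h (g - h) y)) = act RR h (g - h) (f h (e h y))"
  using morph_act[OF em, of h g y] morph_act[OF fm, of h g "e h y"] morph_in[OF em] by simp

lemma fe_zero: "f g (e g 0) = 0"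
  using morph_zero[OF em] morph_zero[OF fm] by simp


lemma finS0: "finite (S0 g)" unfolding S0_def by simp
lemma finS1: "finite (S1 g)" unfolding S1_def by simp

lemma fe_add: "x \<in> sp (F 0) g \<Longrightarrow> y \<in> sp (F 0) g \<Longrightarrow> f g (e g (x + y)) = f g (e g x) + f g (e g y)"
  using morph_add[OF em, of x g y] morph_add[OF fm, of "e g x" g "e g y"] morph_in[OF em] by simp
lemma fe_scale: "x \<in> sp (F 0) g \<Longrightarrow> f g (e g (vscale c x)) = vscale c (f g (e g x))"
  using morph_scale[OF em, of x g c] morph_scale[OF fm, of "e g x" g c] morph_in[OF em] by simp

definition phi0 where "phi0 g x = restr (S0 g) (f g (e g x))"

lemma phi0_lin: "linear_on (sp (F 0) g) (phi0 g)"
  unfolding linear_on_eq phi0_def by (simp add: fe_add fe_scale restr_add restr_scale)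

lemma supp_restr: "(\<forall>i. v i \<noteq> 0 \<longrightarrow> i \<in> S) \<Longrightarrow> restr S v = v"
  unfolding restr_def by (rule ext) auto

lemma phi0_img: "phi0 g ` sp (F 0) g = {v. \<forall>i. v i \<noteq> 0 \<longrightarrow> i \<in> S0 g}"
proof
  show "phi0 g ` sp (F 0) g \<subseteq> {v. \<forall>i. v i \<noteq> 0 \<longrightarrow> i \<in> S0 g}"
    by (auto simp: phi0_def restr_def split: if_splits)
next
  show "{v. \<forall>i. v i \<noteq> 0 \<longrightarrow> i \<in> S0 g} \<subseteq> phi0 g ` sp (F 0) g"
  proof
    fix v :: "nat \<Rightarrow> 'k" assume v: "v \<in> {v. \<forall>i. v i \<noteq> 0 \<longrightarrow> i \<in> S0 g}"
    have "v \<in> sp RR g" unfolding Rsp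
    proof (intro CollectI allI impI)
      fix i assume "v i \<noteq> 0"
      then have "i \<in> S0 g" using v by blast
      then show "i < length bars \<and> al i \<le> g \<and> g < en i" using posj by (auto simp: S0_def)
    qed
    then obtain y where y: "y \<in> sp (F 0) g" "f g (e g y) = v" using lift by blast
    have "phi0 g y = v" unfolding phi0_def y(2) using v by (intro supp_restr) blast
    then show "v \<in> phi0 g ` sp (F 0) g" using y(1) by (intro image_eqI[of _ _ y]) simp_all
  qed
qed

lemma ker_subspace: "V.subspace S \<Longrightarrow> linear_on S p \<Longrightarrow> V.subspace {x\<in>S. p x = 0}"
proof (rule V.subspaceI)
  assume S: "V.subspace S" and p: "linear_on S p"
  show "0 \<in> {x \<in> S. p x = 0}" using V.subspace_0[OF S] lin_zero[OF p S] by simp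
  fix x y assume "x \<in> {x \<in> S. p x = 0}" "y \<in> {x \<in> S. p x = 0}"
  then show "x + y \<in> {x \<in> S. p x = 0}" using V.subspace_add[OF S] lin_add[OF p] by simp
next
  fix c x assume S: "V.subspace S" and p: "linear_on S p" and "x \<in> {x \<in> S. p x = 0}"
  then show "vscale c x \<in> {x \<in> S. p x = 0}" using V.subspace_scale[OF S] lin_scale[OF p]
    by (simp add: V.scale_zero_right)
qed

lemma phi0_ker: "{x\<in>sp (F 0) g. phi0 g x = 0} = bnd F d g 0"
proof
  show "bnd F d g 0 \<subseteq> {x\<in>sp (F 0) g. phi0 g x = 0}"
    unfolding bnd_span
  proof (rule V.span_minimal[OF _ ker_subspace[OF Fsub phi0_lin]], safe)
    fix z assume z: "z \<in> sp (F (Suc 0)) g"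
    show "d 0 g z \<in> sp (F 0) g" using morph_in[OF dm] z by simp
    show "phi0 g (d 0 g z) = 0" unfolding phi0_def using e_d0[of z g] z morph_zero[OF fm, of g]
      by (simp add: restr_zero)
  next
    fix p assume p: "p \<in> prec (F 0) g"
    then show "p \<in> sp (F 0) g" using prec_sub[OF Fpm] by blast
    obtain h y where h: "h < g" "y \<in> sp (F 0) h" "p = act (F 0) h (g - h) y"
      using prec_rep1[OF Fpm p] by blast
    have w: "f h (e h y) \<in> sp RR h" using fe_in[OF h(2)] .
    have "f g (e g p) = act RR h (g - h) (f h (e h y))" using h fe_act[of h g y] by simp
    then show "phi0 g p = 0" unfolding phi0_def restr_def
    proof -
      assume eq: "f g (e g p) = act RR h (g - h) (f h (e h y))"
      show "(\<lambda>j. if j \<in> S0 g then f g (e g p) j else 0) = 0"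
      proof (rule ext)
        fix j
        show "(if j \<in> S0 g then f g (e g p) j else 0) = 0 j"
        proof (cases "j \<in> S0 g")
          case True
          have "f h (e h y) j = 0"
          proof (rule ccontr)
            assume "f h (e h y) j \<noteq> 0"
            then have "al j \<le> h" using w unfolding Rsp by blast
            then show False using True h(1) by (simp add: S0_def)
          qed
          then show ?thesis using eq True by (simp add: Ract zero_fun_apply)
        qed (simp add: zero_fun_apply)
      qed
    qed
  qed
next
  show "{x\<in>sp (F 0) g. phi0 g x = 0} \<subseteq> bnd F d g 0"
  proof clarify
    fix x assume x: "x \<in> sp (F 0) g" and z: "phi0 g x = 0"
    define v where "v = f g (e g x)"
    have vR: "v \<in> sp RR g" unfolding v_def using fe_in[OF x] .
    define H where "H = Max (insert (g - 1) {al j |j. j < length bars \<and> al j < g})"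
    have finA: "finite {al j |j. j < length bars \<and> al j < g}" by simp
    have Hg: "H < g" unfolding H_def using finA by (subst Max_less_iff) auto
    have alH: "al j \<le> H" if "j < length bars" "al j < g" for j
      unfolding H_def using finA that by (intro Max_ge) auto
    have vnz: "j < length bars \<and> al j < g \<and> g < en j" if "v j \<noteq> 0" for j
    proof -
      have a: "j < length bars" "al j \<le> g" "g < en j" using vR that unfolding Rsp by blast+
      have "j \<notin> S0 g"
      proof
        assume "j \<in> S0 g"
        then have "phi0 g x j = v j" by (simp add: phi0_def restr_def v_def)
        then show False using z that by (simp add: zero_fun_apply)
      qed
      then show ?thesis using a by (auto simp: S0_def)
    qed
    have vH: "v \<in> sp RR H" unfolding Rsp
    proof (intro CollectI allI impI)
      fix j assume "v j \<noteq> 0"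
      then show "j < length bars \<and> al j \<le> H \<and> H < en j" using vnz alH Hg by force
    qed
    have actv: "act RR H (g - H) v = v"
      unfolding Ract by (rule ext) (use vnz in auto)
    obtain y where y: "y \<in> sp (F 0) H" "f H (e H y) = v" using lift[OF vH] by blast
    define a where "a = act (F 0) H (g - H) y"
    have a: "a \<in> sp (F 0) g" unfolding a_def using act_in[OF Fpm] y Hg by simp
    have "f g (e g a) = f g (e g x)" unfolding a_def using fe_act[of H g y] y Hg actv
      by (simp add: v_def)
    then have "e g a = e g x" using f_inj morph_in[OF em] a x by blast
    then have "e g (x - a) = 0" using morph_diff[OF em x a] by simp
    then have "x - a \<in> bnd F d g 0" using U0_of_ker[OF V.subspace_diff[OF Fsub x a]] by blast
    moreover have "a \<in> bnd F d g 0" unfolding bnd_span a_def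
      by (rule V.span_base) (use y Hg in \<open>auto intro: prec_act\<close>)
    ultimately have "(x - a) + a \<in> bnd F d g 0" unfolding bnd_span by (rule V.span_add)
    then show "x \<in> bnd F d g 0" by simp
  qed
qed

lemma qdim0: "qdim (cyc F d g 0) (bnd F d g 0) = card (S0 g)"
  using dim_lemma[OF Fsub bnd_sub[of g 0, unfolded cyc0] phi0_lin phi0_img phi0_ker finS0]
  by (simp add: cyc0)


lemma cyc1: "cyc F d g 1 = {x\<in>sp (F 1) g. d 0 g x \<in> prec (F 0) g}" by (simp add: cyc_def)

definition rep1 where "rep1 g x = (SOME hy. fst hy < g \<and> snd hy \<in> sp (F 0) (fst hy) \<and>
    d 0 g x = act (F 0) (fst hy) (g - fst hy) (snd hy))"
definition phi1 where "phi1 g x = restr (S1 g) (f (fst (rep1 g x)) (e (fst (rep1 g x)) (snd (rep1 g x))))"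

lemma compat_le:
  assumes hh: "h \<le> h'" "h' < g" and y: "y \<in> sp (F 0) h" and y': "y' \<in> sp (F 0) h'"
    and eq: "act (F 0) h (g - h) y = act (F 0) h' (g - h') y'"
  shows "restr (S1 g) (f h (e h y)) = restr (S1 g) (f h' (e h' y'))"
proof -
  have "act (F 0) h' (g - h') (act (F 0) h (h' - h) y) = act (F 0) h' (g - h') y'"
    using act_comp[OF Fpm, of h h' g y] hh y eq by simp
  then have y'e: "y' = act (F 0) h (h' - h) y"
    using free_inj[OF Ffree[of 0], of h' g "act (F 0) h (h' - h) y" y'] act_in[OF Fpm, of h h' y] hh y y'
    by simp
  have "f h' (e h' y') = act RR h (h' - h) (f h (e h y))" unfolding y'e by (rule fe_act[OF hh(1) y])
  then show ?thesis unfolding restr_def using hh by (auto simp: Ract S1_def)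
qed

lemma compat:
  assumes "h < g" "h' < g" and y: "y \<in> sp (F 0) h" and y': "y' \<in> sp (F 0) h'"
    and eq: "act (F 0) h (g - h) y = act (F 0) h' (g - h') y'"
  shows "restr (S1 g) (f h (e h y)) = restr (S1 g) (f h' (e h' y'))"
proof (cases "h \<le> h'")
  case True then show ?thesis using compat_le assms by blast
next
  case False then show ?thesis using compat_le[of h' h g y' y] assms by simp
qed

lemma phi1_rep:
  assumes h: "h < g" and y: "y \<in> sp (F 0) h" and r: "d 0 g x = act (F 0) h (g - h) y"
  shows "phi1 g x = restr (S1 g) (f h (e h y))"
proof -
  let ?P = "\<lambda>hy. fst hy < g \<and> snd hy \<in> sp (F 0) (fst hy) \<and> d 0 g x = act (F 0) (fst hy) (g - fst hy) (snd hy)"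
  have "?P (h, y)" using h y r by simp
  then have P: "?P (rep1 g x)" unfolding rep1_def by (rule someI)
  show ?thesis unfolding phi1_def
    using compat[of "fst (rep1 g x)" g h "snd (rep1 g x)" y] P h y r by simp
qed

lemma phi1_lin: "linear_on (cyc F d g 1) (phi1 g)"
  unfolding linear_on_eq
proof (intro conjI ballI allI)
  fix x y assume x: "x \<in> cyc F d g 1" and y: "y \<in> cyc F d g 1"
  have sub: "{x, y} \<subseteq> cyc F d g 1" using x y by simp
  have "\<exists>H yy. H < g \<and> (\<forall>z\<in>{x, y}. yy z \<in> sp (F 0) H \<and> d 0 g z = act (F 0) H (g - H) (yy z))"
    by (rule common_rep[OF _ sub]) simp
  then obtain H yy where H: "H < g" and yy0: "\<forall>z\<in>{x, y}. yy z \<in> sp (F 0) H \<and> d 0 g z = act (F 0) H (g - H) (yy z)"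
    by (elim exE conjE)
  have yy: "\<And>z. z \<in> {x, y} \<Longrightarrow> yy z \<in> sp (F 0) H \<and> d 0 g z = act (F 0) H (g - H) (yy z)"
    using yy0 by (rule bspec)
  have xs: "x \<in> sp (F 1) g" "y \<in> sp (F 1) g" using x y unfolding cyc1 by blast+
  have yyx: "yy x \<in> sp (F 0) H" "d 0 g x = act (F 0) H (g - H) (yy x)" using yy[of x] by simp_all
  have yyy: "yy y \<in> sp (F 0) H" "d 0 g y = act (F 0) H (g - H) (yy y)" using yy[of y] by simp_all
  have "d 0 g (x + y) = act (F 0) H (g - H) (yy x + yy y)"
    using morph_add[OF dm1 xs] act_add[OF Fpm[of 0], of H g "yy x" "yy y"] H yyx yyy by simp
  then have "phi1 g (x + y) = restr (S1 g) (f H (e H (yy x + yy y)))"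
    using phi1_rep[OF H V.subspace_add[OF Fsub yyx(1) yyy(1)]] by simp
  also have "\<dots> = restr (S1 g) (f H (e H (yy x))) + restr (S1 g) (f H (e H (yy y)))"
    using fe_add[OF yyx(1) yyy(1)] by (simp add: restr_add)
  also have "\<dots> = phi1 g x + phi1 g y" using phi1_rep[OF H yyx(1,2)] phi1_rep[OF H yyy(1,2)] by simp
  finally show "phi1 g (x + y) = phi1 g x + phi1 g y" .
next
  fix c x assume x: "x \<in> cyc F d g 1"
  obtain h y where h: "h < g" "y \<in> sp (F 0) h" "d 0 g x = act (F 0) h (g - h) y"
    using W1_rep[OF x, of "g - 1"] by auto
  have xs: "x \<in> sp (F 1) g" using x unfolding cyc1 by blast
  have "d 0 g (vscale c x) = act (F 0) h (g - h) (vscale c y)"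
    using morph_scale[OF dm1 xs] act_scale[OF Fpm[of 0], of h g y c] h by simp
  then have "phi1 g (vscale c x) = restr (S1 g) (f h (e h (vscale c y)))"
    using phi1_rep[OF h(1) V.subspace_scale[OF Fsub h(2)]] by simp
  also have "\<dots> = vscale c (phi1 g x)" using fe_scale[OF h(2)] phi1_rep[OF h] by (simp add: restr_scale)
  finally show "phi1 g (vscale c x) = vscale c (phi1 g x)" .
qed

lemma phi1_img: "phi1 g ` cyc F d g 1 = {v. \<forall>i. v i \<noteq> 0 \<longrightarrow> i \<in> S1 g}"
proof
  show "phi1 g ` cyc F d g 1 \<subseteq> {v. \<forall>i. v i \<noteq> 0 \<longrightarrow> i \<in> S1 g}"
    by (auto simp: phi1_def restr_def split: if_splits)
next
  show "{v. \<forall>i. v i \<noteq> 0 \<longrightarrow> i \<in> S1 g} \<subseteq> phi1 g ` cyc F d g 1"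
  proof
    fix v :: "nat \<Rightarrow> 'k" assume v: "v \<in> {v. \<forall>i. v i \<noteq> 0 \<longrightarrow> i \<in> S1 g}"
    define H where "H = Max (insert (g - 1) (al ` S1 g))"
    have Hg: "H < g" unfolding H_def using finS1 posj by (subst Max_less_iff) (auto simp: S1_def)
    have alH: "al j \<le> H" if "j \<in> S1 g" for j
      unfolding H_def using finS1 that by (intro Max_ge) auto
    have vH: "v \<in> sp RR H" unfolding Rsp
    proof (intro CollectI allI impI)
      fix i assume "v i \<noteq> 0"
      then have "i \<in> S1 g" using v by blast
      then show "i < length bars \<and> al i \<le> H \<and> H < en i" using alH Hg by (auto simp: S1_def)
    qed
    obtain y where y: "y \<in> sp (F 0) H" "f H (e H y) = v" using lift[OF vH] by blast
    have av: "act RR H (g - H) v = 0"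
    proof (rule ext)
      fix i show "act RR H (g - H) v i = 0 i"
        using v by (auto simp: Ract S1_def zero_fun_apply)
    qed
    define a where "a = act (F 0) H (g - H) y"
    have a: "a \<in> sp (F 0) g" unfolding a_def using act_in[OF Fpm] y Hg by simp
    have "f g (e g a) = 0" unfolding a_def using fe_act[of H g y] y Hg av by simp
    then have "e g a = 0" using f_inj0 morph_in[OF em a] by blast
    then obtain x where x: "x \<in> sp (F 1) g" "a = d 0 g x" using e_ker[OF a] by blast
    have "d 0 g x \<in> prec (F 0) g" using prec_act[OF Hg y(1)] x(2) by (simp add: a_def)
    then have "x \<in> cyc F d g 1" unfolding cyc1 using x(1) by blast
    moreover have "phi1 g x = v"
      using phi1_rep[OF Hg y(1), of x] x(2) y(2) v by (simp add: a_def supp_restr)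
    ultimately show "v \<in> phi1 g ` cyc F d g 1" by (intro image_eqI[of _ _ x]) simp_all
  qed
qed

lemma phi1_ker: "{x\<in>cyc F d g 1. phi1 g x = 0} = bnd F d g 1"
proof
  show "bnd F d g 1 \<subseteq> {x\<in>cyc F d g 1. phi1 g x = 0}"
    unfolding bnd_span
  proof (rule V.span_minimal[OF _ ker_subspace[OF cyc_subspace phi1_lin]], safe)
    fix z assume z: "z \<in> sp (F (Suc 1)) g"
    have z2: "z \<in> sp (F (Suc (Suc 0))) g" using z by simp
    have dz: "d 0 g (d 1 g z) = 0" using d_d[OF z2] by simp
    have d1s: "d 1 g z \<in> sp (F 1) g" using morph_in[OF dm z] .
    have "d 0 g (d 1 g z) \<in> prec (F 0) g" using dz V.subspace_0[OF prec_subspace] by simp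
    then show "d 1 g z \<in> cyc F d g 1" unfolding cyc1 using d1s by blast
    have "d 0 g (d 1 g z) = act (F 0) (g - 1) (g - (g - 1)) 0"
      using dz act_zero[OF Fpm, of "g - 1" g] by simp
    then have "phi1 g (d 1 g z) = restr (S1 g) (f (g - 1) (e (g - 1) 0))"
      by (intro phi1_rep) (auto intro: V.subspace_0[OF Fsub])
    then show "phi1 g (d 1 g z) = 0" using fe_zero by (simp add: restr_zero)
  next
    fix p assume p: "p \<in> prec (F 1) g"
    have "p \<in> sp (F 1) g" "d 0 g p \<in> prec (F 0) g" using p prec_sub[OF Fpm] morph_prec[OF dm1] by blast+
    then show "p \<in> cyc F d g 1" unfolding cyc1 by blast
    obtain h q where h: "h < g" "q \<in> sp (F 1) h" "p = act (F 1) h (g - h) q"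
      using prec_rep1[OF Fpm p] by blast
    have "d 0 g p = act (F 0) h (g - h) (d 0 h q)" using morph_act[OF dm1, of h g q] h by simp
    then have "phi1 g p = restr (S1 g) (f h (e h (d 0 h q)))"
      using phi1_rep[OF h(1) morph_in[OF dm1 h(2)]] by simp
    then show "phi1 g p = 0" using e_d0[OF h(2)] morph_zero[OF fm] by (simp add: restr_zero)
  qed
next
  show "{x\<in>cyc F d g 1. phi1 g x = 0} \<subseteq> bnd F d g 1"
  proof clarify
    fix x assume x: "x \<in> cyc F d g 1" and z: "phi1 g x = 0"
    obtain h y where h: "h < g" "y \<in> sp (F 0) h" "d 0 g x = act (F 0) h (g - h) y"
      using W1_rep[OF x, of "g - 1"] by auto
    have xs: "x \<in> sp (F 1) g" using x unfolding cyc1 by blast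
    define v where "v = f h (e h y)"
    have vR: "v \<in> sp RR h" unfolding v_def using fe_in[OF h(2)] .
    have rv: "restr (S1 g) v = 0" using phi1_rep[OF h] z by (simp add: v_def)
    have "act RR h (g - h) v = f g (e g (d 0 g x))" unfolding v_def using fe_act[of h g y] h by simp
    also have "\<dots> = 0" using e_d0[OF xs] morph_zero[OF fm] by simp
    finally have av: "act RR h (g - h) v = 0" .
    have vnz: "j < length bars \<and> en j < g" if "v j \<noteq> 0" for j
    proof -
      have a: "j < length bars" "al j \<le> h" "h < en j" using vR that unfolding Rsp by blast+
      have "\<not> g < en j"
      proof
        assume "g < en j"
        then have "act RR h (g - h) v j = v j" using a by (simp add: Ract)
        then show False using av that by (simp add: zero_fun_apply)
      qed
      moreover have "j \<notin> S1 g"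
      proof
        assume "j \<in> S1 g"
        then have "restr (S1 g) v j = v j" by (simp add: restr_def)
        then show False using rv that by (simp add: zero_fun_apply)
      qed
      ultimately show ?thesis using a by (auto simp: S1_def)
    qed
    define H where "H = Max (insert h {en j |j. j < length bars \<and> en j < g})"
    have finA: "finite {en j |j. j < length bars \<and> en j < g}" by simp
    have Hg: "H < g" unfolding H_def using finA h by (subst Max_less_iff) auto
    have hH: "h \<le> H" unfolding H_def using finA by (intro Max_ge) auto
    have enH: "en j \<le> H" if "j < length bars" "en j < g" for j
      unfolding H_def using finA that by (intro Max_ge) auto
    have avH: "act RR h (H - h) v = 0"
    proof (rule ext)
      fix j show "act RR h (H - h) v j = 0 j"
      proof (cases "v j = 0")
        case False
        then have "en j \<le> H" using vnz enH by blast
        then show ?thesis using hH by (simp add: Ract zero_fun_apply)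
      qed (simp add: Ract zero_fun_apply)
    qed
    define b where "b = act (F 0) h (H - h) y"
    have b: "b \<in> sp (F 0) H" unfolding b_def using act_in[OF Fpm] h hH by simp
    have "f H (e H b) = 0" unfolding b_def using fe_act[OF hH h(2)] avH by (simp add: v_def)
    then have "e H b = 0" using f_inj0 morph_in[OF em b] by blast
    have rb: "d 0 g x = act (F 0) H (g - H) b"
      unfolding b_def using act_comp[OF Fpm, of h H g y] h hH Hg by simp
    show "x \<in> bnd F d g 1" by (rule U1_of_ker[OF xs Hg b rb \<open>e H b = 0\<close>])
  qed
qed

lemma qdim1: "qdim (cyc F d g 1) (bnd F d g 1) = card (S1 g)"
  using dim_lemma[OF cyc_subspace bnd_sub phi1_lin phi1_img phi1_ker finS1] by simp


lemma chi: "chiO F d g = C_coeff bars g"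
proof -
  let ?X = "{i. \<not> cyc F d g i \<subseteq> bnd F d g i}"
  let ?t = "\<lambda>i. (-1) ^ i * int (qdim (cyc F d g i) (bnd F d g i))"
  have X: "?X \<subseteq> {0, 1}"
  proof
    fix i assume i: "i \<in> ?X"
    show "i \<in> {0, 1}"
    proof (cases i)
      case (Suc k)
      show ?thesis
      proof (cases k)
        case (Suc k')
        have "cyc F d g i \<subseteq> bnd F d g i"
        proof
          fix x assume "x \<in> cyc F d g i"
          then show "x \<in> bnd F d g i" using cyc_high[of x g k'] \<open>i = Suc k\<close> Suc by simp
        qed
        then show ?thesis using i by simp
      qed (use Suc in simp)
    qed simp
  qed
  have "chiO F d g = sum ?t ?X" by (simp add: chiO_def)
  also have "\<dots> = sum ?t {0, 1}"
  proof (rule sum.mono_neutral_left[OF _ X])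
    show "\<forall>i\<in>{0, 1} - ?X. ?t i = 0"
    proof
      fix i assume "i \<in> {0, 1} - ?X"
      then have "cyc F d g i \<subseteq> bnd F d g i" by blast
      then have "cyc F d g i \<subseteq> V.span (bnd F d g i)" using V.span_superset by blast
      then show "?t i = 0" using qdim_zero by simp
    qed
  qed simp
  also have "\<dots> = int (card (S0 g)) - int (card (S1 g))" using qdim0 qdim1 by simp
  also have "\<dots> = C_coeff bars g"
    by (simp add: C_coeff_def length_filter_conv_card S0_def S1_def al_def en_def split_beta)
  finally show ?thesis .
qed

end


lemma fp_bound:
  assumes fp: "finitely_presented (M :: ('i, 'k::field) pmod)"
  shows "\<exists>n. \<forall>h. \<exists>P. finite P \<and> card P \<le> n \<and> sp M h \<subseteq> V.span P"
proof -
  have "\<exists>(F0 :: (nat, 'k) pmod) (F1 :: (nat, 'k) pmod) d p.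
        fg_free F0 \<and> fg_free F1 \<and> morph F1 F0 d \<and> morph F0 M p \<and>
        (\<forall>g. p g ` sp F0 g = sp M g \<and> {x\<in>sp F0 g. p g x = vzero} = d g ` sp F1 g)"
    using fp unfolding finitely_presented_def by (rule conjunct2)
  then obtain F0 :: "(nat, 'k) pmod" and F1 :: "(nat, 'k) pmod" and dd p where
    F0: "fg_free F0" and pm: "morph F0 M p" and ps0: "\<forall>g. p g ` sp F0 g = sp M g \<and> {x\<in>sp F0 g. p g x = vzero} = dd g ` sp F1 g"
    by (elim exE conjE)
  have ps: "\<forall>g. p g ` sp F0 g = sp M g" using ps0 by simp
  obtain J where J: "finite J" "free_basis F0 J" using F0 by (auto simp: fg_free_def)
  have F0pm: "is_pmod F0" using F0 by (simp add: fg_free_def)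
  show ?thesis
  proof (intro exI allI)
    fix h
    define Jh where "Jh = {(b, a)\<in>J. a \<le> h}"
    define P where "P = (\<lambda>(b, a). p h (act F0 a (h - a) b)) ` Jh"
    have finJh: "finite Jh" unfolding Jh_def by (rule finite_subset[OF _ J(1)]) blast
    have "card P \<le> card Jh" unfolding P_def by (rule card_image_le[OF finJh])
    also have "card Jh \<le> card J" unfolding Jh_def using J(1) by (intro card_mono) auto
    finally have cP: "card P \<le> card J" .
    have "sp M h \<subseteq> V.span P"
    proof
      fix x assume x: "x \<in> sp M h"
      then have "x \<in> p h ` sp F0 h" using ps by simp
      then obtain x' where x': "x' \<in> sp F0 h" "x = p h x'" by blast
      obtain T c where T: "finite T" "T \<subseteq> Jh" "x' = lincomb T c (\<lambda>(b, a). act F0 a (h - a) b)"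
        using free_basis_span[OF J(2) x'(1)] unfolding Jh_def by blast
      have ins: "\<And>t. t \<in> T \<Longrightarrow> (\<lambda>(b, a). act F0 a (h - a) b) t \<in> sp F0 h"
        using T(2) free_basis_mem[OF J(2)] by (auto simp: Jh_def intro!: act_in[OF F0pm])
      have "x = p h (\<Sum>t\<in>T. vscale (c t) ((\<lambda>(b, a). act F0 a (h - a) b) t))"
        using x'(2) T(3) by (simp add: lincomb_eq)
      also have "\<dots> = (\<Sum>t\<in>T. vscale (c t) (p h ((\<lambda>(b, a). act F0 a (h - a) b) t)))"
        by (rule lin_lincomb[OF morph_lin[OF pm] pmod_sub[OF F0pm] ins])
      also have "\<dots> \<in> V.span P"
      proof (intro V.span_sum V.span_scale V.span_base)
        fix t assume "t \<in> T"
        then have "t \<in> Jh" using T by blast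
        then show "p h ((\<lambda>(b, a). act F0 a (h - a) b) t) \<in> P" unfolding P_def
          by (auto simp: split_beta)
      qed
      finally show "x \<in> V.span P" .
    qed
    moreover have "finite P" unfolding P_def using finJh by simp
    ultimately show "finite P \<and> card P \<le> card J \<and> sp M h \<subseteq> V.span P" using cP by blast
  qed
qed

lemma part2:
  fixes M :: "('i, 'k::field) pmod"
  assumes fp: "finitely_presented M" and fr: "free_resolution M F d e"
  shows "critical_series F d \<and>
         (\<forall>bars. barcode_decomp M bars \<longrightarrow> (\<forall>g. chiO F d g = C_coeff bars g))"
proof
  interpret resol M F d e by (rule resol.intro[OF fr])
  obtain n where "\<forall>h. \<exists>P. finite P \<and> card P \<le> n \<and> sp M h \<subseteq> V.span P" using fp_bound[OF fp] by blast
  then show "critical_series F d" by (intro crit) blast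
  show "\<forall>bars. barcode_decomp M bars \<longrightarrow> (\<forall>g. chiO F d g = C_coeff bars g)"
  proof (intro allI impI)
    fix bars g assume bd: "barcode_decomp M bars"
    have pos: "\<forall>(al, len)\<in>set bars. 0 < len" using bd unfolding barcode_decomp_def by (rule conjunct1)
    have "\<exists>f. morph M (region_sum bars :: (nat, 'k) pmod) f \<and>
          (\<forall>g. bij_betw (f g) (sp M g) (sp (region_sum bars :: (nat, 'k) pmod) g))"
      using bd unfolding barcode_decomp_def by (rule conjunct2)
    then obtain f where f: "morph M (region_sum bars :: (nat, 'k) pmod) f"
      "\<forall>g. bij_betw (f g) (sp M g) (sp (region_sum bars :: (nat, 'k) pmod) g)"
      by (elim exE conjE)
    interpret resbar M F d e bars f
      by (rule resbar.intro[OF resol.intro[OF fr]], unfold_locales) (use f pos in auto)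
    show "chiO F d g = C_coeff bars g" by (rule chi)
  qed
qed


lemma ker_subspace': "V.subspace S \<Longrightarrow> linear_on S p \<Longrightarrow> V.subspace {x\<in>S. p x = 0}"
proof (rule V.subspaceI)
  assume S: "V.subspace S" and p: "linear_on S p"
  show "0 \<in> {x \<in> S. p x = 0}" using V.subspace_0[OF S] lin_zero[OF p S] by simp
  fix x y assume "x \<in> {x \<in> S. p x = 0}" "y \<in> {x \<in> S. p x = 0}"
  then show "x + y \<in> {x \<in> S. p x = 0}" using V.subspace_add[OF S] lin_add[OF p] by simp
next
  fix c x assume S: "V.subspace S" and p: "linear_on S p" and "x \<in> {x \<in> S. p x = 0}"
  then show "vscale c x \<in> {x \<in> S. p x = 0}" using V.subspace_scale[OF S] lin_scale[OF p]
    by (simp add: V.scale_zero_right)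
qed

definition kermod :: "('a, 'k::field) pmod \<Rightarrow> (real \<Rightarrow> ('a \<Rightarrow> 'k) \<Rightarrow> ('b \<Rightarrow> 'k)) \<Rightarrow> ('a, 'k) pmod" where
  "kermod F1 dd = \<lparr> sp = (\<lambda>g. {x\<in>sp F1 g. dd g x = 0}), act = act F1 \<rparr>"

lemma kermod_sp: "sp (kermod F1 dd) g = {x\<in>sp F1 g. dd g x = 0}" by (simp add: kermod_def)
lemma kermod_act: "act (kermod F1 dd) = act F1" by (simp add: kermod_def)

lemma kermod_pmod:
  assumes dm: "morph F1 F0 dd"
  shows "is_pmod (kermod F1 dd)"
proof -
  have F1: "is_pmod F1" using morph_pm1[OF dm] .
  have F0: "is_pmod F0" using morph_pm2[OF dm] .
  have sub: "V.subspace (sp (kermod F1 dd) g)" for g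
    unfolding kermod_sp by (rule ker_subspace'[OF pmod_sub[OF F1] morph_lin[OF dm]])
  have ins: "act F1 g s x \<in> sp (kermod F1 dd) (g + s)" if "s \<ge> 0" "x \<in> sp (kermod F1 dd) g" for g s x
  proof -
    have x: "x \<in> sp F1 g" "dd g x = 0" using that unfolding kermod_sp by auto
    have "dd (g + s) (act F1 g (g + s - g) x) = act F0 g (g + s - g) (dd g x)"
      using morph_act[OF dm, of g "g + s" x] that x by simp
    then have "dd (g + s) (act F1 g s x) = 0" using x act_zero[OF F0, of g "g + s"] that by simp
    then show ?thesis unfolding kermod_sp using pmod_act_in[OF F1 that(1) x(1)] by simp
  qed
  show ?thesis unfolding is_pmod_def is_subspace_eq
  proof (intro conjI allI impI ballI)
    fix g show "V.subspace (sp (kermod F1 dd) g)" by (rule sub)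
  next
    fix g s :: real assume s: "0 \<le> s"
    have "linear_on (sp F1 g) (act F1 g s)" by (rule pmod_lin[OF F1 s])
    then show "linear_on (sp (kermod F1 dd) g) (act (kermod F1 dd) g s)"
      unfolding linear_on_eq kermod_act kermod_sp by blast
    show "act (kermod F1 dd) g s ` sp (kermod F1 dd) g \<subseteq> sp (kermod F1 dd) (g + s)"
      unfolding kermod_act using ins s by blast
  next
    fix g x assume "x \<in> sp (kermod F1 dd) g"
    then show "act (kermod F1 dd) g 0 x = x" unfolding kermod_act kermod_sp using act_self[OF F1] by simp
  next
    fix g s t :: real and x assume s: "0 \<le> s" and t: "0 \<le> t" and x: "x \<in> sp (kermod F1 dd) g"
    have "x \<in> sp F1 g" using x unfolding kermod_sp by simp
    then show "act (kermod F1 dd) (g + s) t (act (kermod F1 dd) g s x) = act (kermod F1 dd) g (s + t) x"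
      unfolding kermod_act using F1 s t unfolding is_pmod_def by blast
  qed
qed

definition zmod :: "('a, 'k::field) pmod" where "zmod = \<lparr> sp = (\<lambda>g. {0}), act = (\<lambda>g s x. 0) \<rparr>"

lemma zmod_sp: "sp zmod g = {0}" by (simp add: zmod_def)
lemma zmod_act: "act zmod g s x = 0" by (simp add: zmod_def)

lemma zmod_pmod: "is_pmod zmod"
  unfolding is_pmod_def is_subspace_eq zmod_sp zmod_act linear_on_eq
  by (simp add: V.scale_zero_right)

lemma zmod_free: "is_free zmod"
  unfolding is_free_def
proof (intro conjI zmod_pmod exI[of _ "{}"])
  show "free_basis zmod {}" unfolding free_basis_def zmod_sp
    by (auto simp: lincomb_eq vzero_eq intro: exI[of _ "{}"])
qed


lemma span_to_lincomb:
  assumes x: "x \<in> V.span (iota ` S)"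
  shows "\<exists>T c. finite T \<and> T \<subseteq> S \<and> x = lincomb T c iota"
proof -
  obtain t r where t: "finite t" "t \<subseteq> iota ` S" and xe: "x = (\<Sum>v\<in>t. vscale (r v) v)"
    using x unfolding V.span_explicit by blast
  define inv where "inv = inv_into S iota"
  define T where "T = inv ` t"
  have TS: "T \<subseteq> S" unfolding T_def inv_def using t(2) by (auto intro: inv_into_into)
  have iinv: "iota (inv v) = v" if "v \<in> t" for v unfolding inv_def using t(2) that by (auto intro: f_inv_into_f)
  have inj: "inj_on iota T"
  proof (rule inj_onI)
    fix s1 s2 assume s1: "s1 \<in> T" and s2: "s2 \<in> T" and e: "iota s1 = iota s2"
    obtain v1 where v1: "v1 \<in> t" "s1 = inv v1" using s1 T_def by blast
    obtain v2 where v2: "v2 \<in> t" "s2 = inv v2" using s2 T_def by blast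
    have "v1 = v2" using e v1 v2 iinv by simp
    then show "s1 = s2" using v1 v2 by simp
  qed
  have img: "iota ` T = t" unfolding T_def using iinv by (force simp: image_image)
  have "lincomb T (\<lambda>s. r (iota s)) iota = (\<Sum>s\<in>T. vscale (r (iota s)) (iota s))" by (simp add: lincomb_eq)
  also have "\<dots> = (\<Sum>v\<in>iota ` T. vscale (r v) v)" by (rule sum.reindex[OF inj, symmetric, unfolded comp_def])
  also have "\<dots> = x" using img xe by simp
  finally show ?thesis using TS t(1) T_def by (intro exI[of _ T] exI[of _ "\<lambda>s. r (iota s)"]) auto
qed

lemma lincomb_in_span: "finite T \<Longrightarrow> lincomb T c iota \<in> V.span (iota ` T)"
  unfolding lincomb_eq by (intro V.span_sum V.span_scale V.span_base) auto

locale kf =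
  fixes F1 :: "('a, 'k::field) pmod" and F0 :: "('a, 'k) pmod" and dd and J
  assumes dm: "morph F1 F0 dd" and F0f: "is_free F0" and J: "finite J" and Jb: "free_basis F1 J"
begin

abbreviation K where "K \<equiv> kermod F1 dd"
definition A where "A = snd ` J"
definition iota where "iota g t = (case t of (b, a) \<Rightarrow> act F1 a (g - a) b)"

lemma F1pm: "is_pmod F1" using morph_pm1[OF dm] .
lemma F0pm: "is_pmod F0" using morph_pm2[OF dm] .
lemma Kpm: "is_pmod K" using kermod_pmod[OF dm] .
lemma Ksp: "sp K g = {x\<in>sp F1 g. dd g x = 0}" by (rule kermod_sp)
lemma Kact: "act K = act F1" by (rule kermod_act)

lemma iota_in: "t \<in> J \<Longrightarrow> snd t \<le> g \<Longrightarrow> iota g t \<in> sp F1 g"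
  unfolding iota_def using free_basis_mem[OF Jb] act_in[OF F1pm] by (auto split: prod.splits)

lemma F1_rep: "x \<in> sp F1 g \<Longrightarrow> \<exists>T c. finite T \<and> T \<subseteq> {t\<in>J. snd t \<le> g} \<and> x = lincomb T c (iota g)"
proof -
  assume x: "x \<in> sp F1 g"
  obtain T c where T: "finite T" "T \<subseteq> {(b, a)\<in>J. a \<le> g}" "x = lincomb T c (\<lambda>(b, a). act F1 a (g - a) b)"
    using free_basis_span[OF Jb x] by blast
  have eq: "(\<lambda>(b, a). act F1 a (g - a) b) = iota g" by (simp add: iota_def fun_eq_iff)
  have "T \<subseteq> {t\<in>J. snd t \<le> g}" using T(2) by auto
  then show ?thesis using T(1,3) unfolding eq by (intro exI[of _ T] exI[of _ c]) simp
qed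

lemma reduce_none: "\<not> (\<exists>a\<in>A. a \<le> h) \<Longrightarrow> x \<in> sp F1 h \<Longrightarrow> x = 0"
proof -
  assume n: "\<not> (\<exists>a\<in>A. a \<le> h)" and x: "x \<in> sp F1 h"
  obtain T c where T: "finite T" "T \<subseteq> {t\<in>J. snd t \<le> h}" "x = lincomb T c (iota h)"
    using F1_rep[OF x] by blast
  have "T = {}" using T(2) n by (auto simp: A_def)
  then show "x = 0" using T(3) by (simp add: lincomb_eq)
qed

definition amax where "amax h = Max {a\<in>A. a \<le> h}"

lemma amax: "a0 \<in> A \<Longrightarrow> a0 \<le> h \<Longrightarrow> amax h \<in> A \<and> amax h \<le> h \<and> (\<forall>a\<in>A. a \<le> h \<longrightarrow> a \<le> amax h)"
proof -
  assume a0: "a0 \<in> A" "a0 \<le> h"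
  have fin: "finite {a\<in>A. a \<le> h}" using J by (simp add: A_def)
  have ne: "{a\<in>A. a \<le> h} \<noteq> {}" using a0 by blast
  have "amax h \<in> {a\<in>A. a \<le> h}" unfolding amax_def by (rule Max_in[OF fin ne])
  moreover have "\<forall>a\<in>A. a \<le> h \<longrightarrow> a \<le> amax h" unfolding amax_def using fin by (auto intro: Max_ge)
  ultimately show ?thesis by blast
qed

lemma reduce:
  assumes a0: "a0 \<in> A" "a0 \<le> h" and y: "y \<in> sp K h"
  shows "\<exists>y'\<in>sp K (amax h). y = act F1 (amax h) (h - amax h) y'"
proof -
  let ?m = "amax h"
  have m: "?m \<in> A" "?m \<le> h" "\<And>a. a \<in> A \<Longrightarrow> a \<le> h \<Longrightarrow> a \<le> ?m" using amax[OF a0] by auto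
  have yF: "y \<in> sp F1 h" "dd h y = 0" using y unfolding Ksp by auto
  obtain T c where T: "finite T" "T \<subseteq> {t\<in>J. snd t \<le> h}" "y = lincomb T c (iota h)"
    using F1_rep[OF yF(1)] by blast
  have Tm: "\<And>t. t \<in> T \<Longrightarrow> t \<in> J \<and> snd t \<le> ?m"
  proof -
    fix t assume "t \<in> T"
    then have "t \<in> J" "snd t \<le> h" using T(2) by auto
    then show "t \<in> J \<and> snd t \<le> ?m" using m(3)[of "snd t"] by (simp add: A_def)
  qed
  define y' where "y' = (\<Sum>t\<in>T. vscale (c t) (iota ?m t))"
  have im: "\<And>t. t \<in> T \<Longrightarrow> iota ?m t \<in> sp F1 ?m" using Tm iota_in by blast
  have y'F: "y' \<in> sp F1 ?m" unfolding y'_def by (rule sub_lincomb[OF pmod_sub[OF F1pm] im])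
  have "act F1 ?m (h - ?m) y' = (\<Sum>t\<in>T. vscale (c t) (act F1 ?m (h - ?m) (iota ?m t)))"
    unfolding y'_def using m(2) by (intro lin_lincomb[OF pmod_lin[OF F1pm] pmod_sub[OF F1pm] im]) auto
  also have "\<dots> = (\<Sum>t\<in>T. vscale (c t) (iota h t))"
  proof (intro sum.cong refl)
    fix t assume t: "t \<in> T"
    obtain b a where ba: "t = (b, a)" by fastforce
    have "b \<in> sp F1 a" "a \<le> ?m" using Tm[OF t] ba free_basis_mem[OF Jb] by auto
    then show "vscale (c t) (act F1 ?m (h - ?m) (iota ?m t)) = vscale (c t) (iota h t)"
      unfolding iota_def ba using act_comp[OF F1pm, of a ?m h b] m(2) by simp
  qed
  also have "\<dots> = y" using T(3) by (simp add: lincomb_eq)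
  finally have ay: "act F1 ?m (h - ?m) y' = y" .
  have "act F0 ?m (h - ?m) (dd ?m y') = dd h (act F1 ?m (h - ?m) y')"
    using morph_act[OF dm, of ?m h y'] m(2) y'F by simp
  also have "\<dots> = 0" using ay yF by simp
  finally have "dd ?m y' = 0" using free_inj0[OF F0f, of "h - ?m" "dd ?m y'" ?m] m(2) morph_in[OF dm y'F] by simp
  then have "y' \<in> sp K ?m" unfolding Ksp using y'F by simp
  then show ?thesis using ay by (intro bexI[of _ y']) simp_all
qed


lemma F1_fin: "\<exists>P. finite P \<and> sp F1 g \<subseteq> V.span P"
proof (intro exI conjI)
  show "finite (iota g ` {t\<in>J. snd t \<le> g})" using J by simp
  show "sp F1 g \<subseteq> V.span (iota g ` {t\<in>J. snd t \<le> g})"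
  proof
    fix x assume "x \<in> sp F1 g"
    then obtain T c where T: "finite T" "T \<subseteq> {t\<in>J. snd t \<le> g}" "x = lincomb T c (iota g)"
      using F1_rep by blast
    have "x \<in> V.span (iota g ` T)" using lincomb_in_span[OF T(1)] T(3) by simp
    also have "\<dots> \<subseteq> V.span (iota g ` {t\<in>J. snd t \<le> g})" using T(2) by (intro V.span_mono image_mono)
    finally show "x \<in> V.span (iota g ` {t\<in>J. snd t \<le> g})" .
  qed
qed

definition Bp where "Bp a = (SOME B. B \<subseteq> prec K a \<and> V.independent B \<and> prec K a \<subseteq> V.span B)"
definition Bw where "Bw a = (SOME B. Bp a \<subseteq> B \<and> B \<subseteq> sp K a \<and> V.independent B \<and> sp K a \<subseteq> V.span B)"
definition C where "C a = Bw a - Bp a"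

lemma Bp: "Bp a \<subseteq> prec K a \<and> V.independent (Bp a) \<and> prec K a \<subseteq> V.span (Bp a)"
proof -
  obtain B where "{} \<subseteq> B" "B \<subseteq> prec K a" "V.independent B" "prec K a \<subseteq> V.span B"
    by (rule V.maximal_independent_subset_extend[OF empty_subsetI V.independent_empty])
  then have "\<exists>B. B \<subseteq> prec K a \<and> V.independent B \<and> prec K a \<subseteq> V.span B" by blast
  then show ?thesis unfolding Bp_def by (rule someI_ex)
qed

lemma Bw: "Bp a \<subseteq> Bw a \<and> Bw a \<subseteq> sp K a \<and> V.independent (Bw a) \<and> sp K a \<subseteq> V.span (Bw a)"
proof -
  have s: "Bp a \<subseteq> sp K a" using Bp prec_sub[OF Kpm] by blast
  obtain B where "Bp a \<subseteq> B" "B \<subseteq> sp K a" "V.independent B" "sp K a \<subseteq> V.span B"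
    by (rule V.maximal_independent_subset_extend[OF s conjunct1[OF conjunct2[OF Bp]]])
  then have "\<exists>B. Bp a \<subseteq> B \<and> B \<subseteq> sp K a \<and> V.independent B \<and> sp K a \<subseteq> V.span B" by blast
  then show ?thesis unfolding Bw_def by (rule someI_ex)
qed

lemma C_sub: "C a \<subseteq> sp K a" using Bw unfolding C_def by blast

lemma C_span: "sp K a \<subseteq> V.span (prec K a \<union> C a)"
proof -
  have "Bw a \<subseteq> prec K a \<union> C a" using Bp unfolding C_def by blast
  then have "V.span (Bw a) \<subseteq> V.span (prec K a \<union> C a)" by (rule V.span_mono)
  then show ?thesis using Bw by blast
qed

lemma C_fin: "finite (C a)"
proof -
  obtain P where P: "finite P" "sp F1 a \<subseteq> V.span P" using F1_fin by blast
  have "Bw a \<subseteq> V.span P" using Bw P Ksp by blast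
  then have "finite (Bw a)" using V.independent_span_bound[OF P(1)] Bw by blast
  then show ?thesis unfolding C_def by simp
qed

lemma C_indep:
  assumes T: "finite T" "T \<subseteq> C a" and r: "(\<Sum>b\<in>T. vscale (r b) b) \<in> prec K a" and b: "b \<in> T"
  shows "r b = 0"
proof (rule ccontr)
  assume rb: "r b \<noteq> 0"
  have "(\<Sum>b\<in>T. vscale (r b) b) \<in> V.span (Bp a)" using r Bp by blast
  then obtain S q where S: "finite S" "S \<subseteq> Bp a" "(\<Sum>b\<in>T. vscale (r b) b) = (\<Sum>x\<in>S. vscale (q x) x)"
    unfolding V.span_explicit by blast
  have disj: "T \<inter> S = {}" using T S C_def by blast
  define u where "u = (\<lambda>x. if x \<in> T then r x else - q x)"
  have "(\<Sum>x\<in>T \<union> S. vscale (u x) x) = (\<Sum>x\<in>T. vscale (u x) x) + (\<Sum>x\<in>S. vscale (u x) x)"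
    by (rule sum.union_disjoint) (use T S disj in auto)
  also have "(\<Sum>x\<in>T. vscale (u x) x) = (\<Sum>x\<in>T. vscale (r x) x)" by (simp add: u_def)
  also have "(\<Sum>x\<in>S. vscale (u x) x) = (\<Sum>x\<in>S. vscale (- q x) x)"
    using disj by (intro sum.cong) (auto simp: u_def)
  also have "\<dots> = - (\<Sum>x\<in>S. vscale (q x) x)" by (simp add: V.scale_minus_left sum_negf)
  finally have "(\<Sum>x\<in>T \<union> S. vscale (u x) x) = (\<Sum>x\<in>T. vscale (r x) x) + - (\<Sum>x\<in>S. vscale (q x) x)" .
  also have "\<dots> = 0" unfolding S(3) by (rule add.right_inverse)
  finally have z: "(\<Sum>x\<in>T \<union> S. vscale (u x) x) = 0" .
  have sub: "T \<union> S \<subseteq> Bw a" using T S Bw C_def by blast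
  have "u b \<noteq> 0" using rb b by (simp add: u_def)
  then have "V.dependent (Bw a)" unfolding V.dependent_explicit
    using T(1) S(1) sub z b by (intro exI[of _ "T \<union> S"] exI[of _ u]) auto
  then show False using Bw by blast
qed

definition JK where "JK = {(b, a). a \<in> A \<and> b \<in> C a}"

lemma JK_fin: "finite JK"
proof -
  have "JK = (\<Union>a\<in>A. (\<lambda>b. (b, a)) ` C a)" unfolding JK_def by auto
  moreover have "finite A" using J by (simp add: A_def)
  ultimately show ?thesis using C_fin by simp
qed

definition G where "G g = iota g ` {t\<in>JK. snd t \<le> g}"

lemma JK_mem: "t \<in> JK \<Longrightarrow> fst t \<in> sp K (snd t)"
  unfolding JK_def using C_sub by (auto simp: subset_iff)

lemma iotaK: "t \<in> JK \<Longrightarrow> snd t \<le> g \<Longrightarrow> iota g t \<in> sp K g"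
  unfolding iota_def using JK_mem[of t] act_in[OF Kpm, of "snd t" g "fst t"] by (auto simp: Kact split: prod.splits)

lemma G_sub: "G g \<subseteq> sp K g" unfolding G_def using iotaK by blast

lemma G_push: "h \<le> g \<Longrightarrow> act F1 h (g - h) ` G h \<subseteq> G g"
proof
  fix z assume hg: "h \<le> g" and z: "z \<in> act F1 h (g - h) ` G h"
  then obtain t where t: "t \<in> JK" "snd t \<le> h" "z = act F1 h (g - h) (iota h t)" unfolding G_def by blast
  obtain b a where ba: "t = (b, a)" by fastforce
  have bK: "b \<in> sp F1 a" using JK_mem[OF t(1)] ba Ksp by simp
  have "z = iota g t" unfolding t(3) iota_def ba using act_comp[OF F1pm, of a h g b] t(2) ba hg bK by simp
  then show "z \<in> G g" unfolding G_def using t hg by auto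
qed

lemma span_push:
  assumes hg: "h \<le> g" and y: "y \<in> sp K h" "y \<in> V.span (G h)"
  shows "act F1 h (g - h) y \<in> V.span (G g)"
proof -
  have lin: "linear_on (sp K h) (act F1 h (g - h))" using pmod_lin[OF Kpm, of "g - h" h] hg by (simp add: Kact)
  have "act F1 h (g - h) y \<in> V.span (act F1 h (g - h) ` G h)"
    by (rule lin_span_sub[OF pmod_sub[OF Kpm] lin G_sub y(2)])
  also have "\<dots> \<subseteq> V.span (G g)" by (rule V.span_mono[OF G_push[OF hg]])
  finally show ?thesis .
qed

lemma C_G: "a \<in> A \<Longrightarrow> C a \<subseteq> G a"
proof
  fix b assume a: "a \<in> A" and b: "b \<in> C a"
  have "(b, a) \<in> JK" using a b by (simp add: JK_def)
  moreover have "iota a (b, a) = b" unfolding iota_def using act_self[OF F1pm] b C_sub Ksp by auto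
  ultimately show "b \<in> G a" unfolding G_def by (force intro: image_eqI[of _ _ "(b, a)"])
qed


lemma spanA_n: "\<forall>a. a \<in> A \<longrightarrow> card {a'\<in>A. a' < a} = n \<longrightarrow> sp K a \<subseteq> V.span (G a)"
proof (induct n rule: less_induct)
  case (less n)
  show ?case
  proof (intro allI impI)
    fix a assume a: "a \<in> A" and cn: "card {a'\<in>A. a' < a} = n"
    have finA: "finite A" using J by (simp add: A_def)
    have pc: "prec K a \<union> C a \<subseteq> V.span (G a)"
    proof
      fix p assume "p \<in> prec K a \<union> C a"
      then show "p \<in> V.span (G a)"
      proof
        assume "p \<in> C a"
        then show ?thesis using C_G[OF a] V.span_superset by blast
      next
        assume p: "p \<in> prec K a"
        obtain h y where h: "h < a" "y \<in> sp K h" "p = act K h (a - h) y"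
          using prec_rep1[OF Kpm p] by blast
        show ?thesis
        proof (cases "\<exists>a0\<in>A. a0 \<le> h")
          case True
          then obtain a0 where a0: "a0 \<in> A" "a0 \<le> h" by blast
          let ?m = "amax h"
          have m: "?m \<in> A" "?m \<le> h" using amax[OF a0] by auto
          obtain y' where y': "y' \<in> sp K ?m" "y = act F1 ?m (h - ?m) y'" using reduce[OF a0 h(2)] by blast
          have sub: "{a'\<in>A. a' < ?m} \<subset> {a'\<in>A. a' < a}" using m h(1) by force
          have "card {a'\<in>A. a' < ?m} < n"
            using psubset_card_mono[OF _ sub] finA cn by simp
          then have IH: "sp K ?m \<subseteq> V.span (G ?m)" using less m(1) by blast
          have "p = act F1 ?m (a - ?m) y'"
            using h(3) y'(2) act_comp[OF Kpm, of ?m h a y'] y'(1) m(2) h(1) by (simp add: Kact)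
          also have "\<dots> \<in> V.span (G a)" using span_push[of ?m a y'] IH y'(1) m(2) h(1) by auto
          finally show ?thesis .
        next
          case False
          have "y \<in> sp F1 h" using h(2) Ksp by simp
          then have "y = 0" using reduce_none[OF False] by simp
          then have "p = 0" using h(3) act_zero[OF Kpm, of h a] h(1) by simp
          then show ?thesis using V.span_zero by simp
        qed
      qed
    qed
    have "V.span (prec K a \<union> C a) \<subseteq> V.span (G a)" by (rule V.span_minimal[OF pc V.subspace_span])
    then show "sp K a \<subseteq> V.span (G a)" using C_span by blast
  qed
qed

lemma spanA: "a \<in> A \<Longrightarrow> sp K a \<subseteq> V.span (G a)"
  using spanA_n by blast

lemma span_all: "sp K g \<subseteq> V.span (G g)"
proof
  fix x assume x: "x \<in> sp K g"
  show "x \<in> V.span (G g)"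
  proof (cases "\<exists>a0\<in>A. a0 \<le> g")
    case True
    then obtain a0 where a0: "a0 \<in> A" "a0 \<le> g" by blast
    let ?m = "amax g"
    have m: "?m \<in> A" "?m \<le> g" using amax[OF a0] by auto
    obtain x' where x': "x' \<in> sp K ?m" "x = act F1 ?m (g - ?m) x'" using reduce[OF a0 x] by blast
    have "x' \<in> V.span (G ?m)" using spanA[OF m(1)] x'(1) by blast
    then show ?thesis using span_push[OF m(2) x'(1)] x'(2) by simp
  next
    case False
    have "x \<in> sp F1 g" using x Ksp by simp
    then have "x = 0" using reduce_none[OF False] by simp
    then show ?thesis using V.span_zero by simp
  qed
qed

lemma F1free: "is_free F1" unfolding is_free_def using F1pm Jb by blast

lemma indep:
  assumes T: "finite T" "T \<subseteq> {t\<in>JK. snd t \<le> g}" and z: "(\<Sum>t\<in>T. vscale (c t) (iota g t)) = 0"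
    and t0: "t0 \<in> T"
  shows "c t0 = 0"
proof (rule ccontr)
  assume ct0: "c t0 \<noteq> 0"
  define T' where "T' = {t\<in>T. c t \<noteq> 0}"
  have T'T: "T' \<subseteq> T" unfolding T'_def by blast
  have finT': "finite T'" using T(1) T'T finite_subset by blast
  have neT': "T' \<noteq> {}" using t0 ct0 T'_def by blast
  define am where "am = Max (snd ` T')"
  have am_in: "am \<in> snd ` T'" unfolding am_def using finT' neT' by (intro Max_in) auto
  have am_ge: "snd t \<le> am" if "t \<in> T'" for t unfolding am_def using finT' that by (intro Max_ge) auto
  have amg: "am \<le> g" using am_in T'T T(2) by auto
  have T'JK: "\<And>t. t \<in> T' \<Longrightarrow> t \<in> JK \<and> snd t \<le> g" using T'T T(2) by blast
  have z': "(\<Sum>t\<in>T'. vscale (c t) (iota g t)) = 0"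
  proof -
    have "(\<Sum>t\<in>T'. vscale (c t) (iota g t)) = (\<Sum>t\<in>T. vscale (c t) (iota g t))"
      by (rule sum.mono_neutral_left[OF T(1) T'T]) (auto simp: T'_def V.scale_zero_left)
    then show ?thesis using z by simp
  qed
  define zz where "zz = (\<Sum>t\<in>T'. vscale (c t) (iota am t))"
  have ins: "\<And>t. t \<in> T' \<Longrightarrow> iota am t \<in> sp K am" using iotaK T'JK am_ge by blast
  have insF: "\<And>t. t \<in> T' \<Longrightarrow> iota am t \<in> sp F1 am" using ins Ksp by blast
  have zzK: "zz \<in> sp K am" unfolding zz_def by (rule sub_lincomb[OF pmod_sub[OF Kpm] ins])
  have zzF: "zz \<in> sp F1 am" using zzK Ksp by simp
  have "act F1 am (g - am) zz = (\<Sum>t\<in>T'. vscale (c t) (act F1 am (g - am) (iota am t)))"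
    unfolding zz_def using amg by (intro lin_lincomb[OF pmod_lin[OF F1pm] pmod_sub[OF F1pm] insF]) auto
  also have "\<dots> = (\<Sum>t\<in>T'. vscale (c t) (iota g t))"
  proof (intro sum.cong refl)
    fix t assume t: "t \<in> T'"
    obtain b a where ba: "t = (b, a)" by fastforce
    have "b \<in> sp F1 a" using JK_mem[of t] T'JK[OF t] ba Ksp by simp
    then show "vscale (c t) (act F1 am (g - am) (iota am t)) = vscale (c t) (iota g t)"
      unfolding iota_def ba using act_comp[OF F1pm, of a am g b] am_ge[OF t] amg ba by simp
  qed
  also have "\<dots> = 0" by (rule z')
  finally have "act F1 am (g - am) zz = 0" .
  then have zz0: "zz = 0" using free_inj0[OF F1free, of "g - am" zz am] amg zzF by simp
  define Ttop where "Ttop = {t\<in>T'. snd t = am}"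
  define Tlow where "Tlow = {t\<in>T'. snd t \<noteq> am}"
  have TU: "T' = Ttop \<union> Tlow" by (auto simp: Ttop_def Tlow_def)
  have finTop: "finite Ttop" using finT' by (simp add: Ttop_def)
  have finLow: "finite Tlow" using finT' by (simp add: Tlow_def)
  have split: "zz = (\<Sum>t\<in>Ttop. vscale (c t) (iota am t)) + (\<Sum>t\<in>Tlow. vscale (c t) (iota am t))"
    unfolding zz_def TU by (rule sum.union_disjoint[OF finTop finLow]) (auto simp: Ttop_def Tlow_def)
  have lowp: "(\<Sum>t\<in>Tlow. vscale (c t) (iota am t)) \<in> prec K am"
  proof (rule sub_lincomb[OF prec_subspace])
    fix t assume t: "t \<in> Tlow"
    obtain b a where ba: "t = (b, a)" by fastforce
    have tT: "t \<in> T'" "snd t \<noteq> am" using t Tlow_def by auto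
    have "a < am" using am_ge[OF tT(1)] tT(2) ba by simp
    moreover have "b \<in> sp K a" using JK_mem[of t] T'JK[OF tT(1)] ba by simp
    ultimately show "iota am t \<in> prec K am" unfolding iota_def ba using prec_act[of a am b K]
      by (simp add: Kact)
  qed
  have top_eq: "(\<Sum>t\<in>Ttop. vscale (c t) (iota am t)) = (\<Sum>t\<in>Ttop. vscale (c t) (fst t))"
  proof (intro sum.cong refl)
    fix t assume t: "t \<in> Ttop"
    obtain b a where ba: "t = (b, a)" by fastforce
    have tT: "t \<in> T'" "snd t = am" using t Ttop_def by auto
    have "b \<in> sp F1 a" using JK_mem[of t] T'JK[OF tT(1)] ba Ksp by simp
    then show "vscale (c t) (iota am t) = vscale (c t) (fst t)"
      unfolding iota_def ba using act_self[OF F1pm] tT(2) ba by simp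
  qed
  have "(\<Sum>t\<in>Ttop. vscale (c t) (fst t)) = - (\<Sum>t\<in>Tlow. vscale (c t) (iota am t))"
    using split zz0 top_eq by (simp add: eq_neg_iff_add_eq_0)
  then have topp: "(\<Sum>t\<in>Ttop. vscale (c t) (fst t)) \<in> prec K am"
    using V.subspace_neg[OF prec_subspace lowp] by simp
  have injf: "inj_on fst Ttop"
  proof (rule inj_onI)
    fix t1 t2 assume "t1 \<in> Ttop" "t2 \<in> Ttop" "fst t1 = fst t2"
    then show "t1 = t2" by (auto simp: Ttop_def prod_eq_iff)
  qed
  have "(\<Sum>b\<in>fst ` Ttop. vscale (c (b, am)) b) = (\<Sum>t\<in>Ttop. vscale (c (fst t, am)) (fst t))"
    by (rule sum.reindex[OF injf, unfolded comp_def])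
  also have "\<dots> = (\<Sum>t\<in>Ttop. vscale (c t) (fst t))"
    by (intro sum.cong refl) (auto simp: Ttop_def)
  finally have rp: "(\<Sum>b\<in>fst ` Ttop. vscale (c (b, am)) b) \<in> prec K am" using topp by simp
  have fC: "fst ` Ttop \<subseteq> C am"
  proof
    fix b assume "b \<in> fst ` Ttop"
    then obtain t where t: "t \<in> Ttop" "b = fst t" by blast
    then have "t \<in> JK" "snd t = am" using T'JK Ttop_def by auto
    then show "b \<in> C am" using t(2) by (auto simp: JK_def)
  qed
  obtain t1 where t1: "t1 \<in> T'" "snd t1 = am" using am_in by blast
  have t1top: "t1 \<in> Ttop" using t1 Ttop_def by simp
  have "c (fst t1, am) = 0"
    using C_indep[OF finite_imageI[OF finTop] fC rp] t1top by blast
  moreover have "(fst t1, am) = t1" using t1(2) by (simp add: prod_eq_iff)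
  ultimately show False using t1(1) T'_def by simp
qed

lemma K_free: "is_free K"
  unfolding is_free_def
proof (intro conjI Kpm exI[of _ JK])
  have io: "(\<lambda>(b, a). act K a (g - a) b) = iota g" for g by (simp add: Kact iota_def fun_eq_iff)
  have st: "{(b, a)\<in>JK. a \<le> g} = {t\<in>JK. snd t \<le> g}" for g by auto
  show "free_basis K JK" unfolding free_basis_def io st
  proof (intro conjI allI impI ballI)
    fix t assume "t \<in> JK"
    then show "case t of (b, a) \<Rightarrow> b \<in> sp K a" using JK_mem by (auto split: prod.splits)
  next
    fix g T c t assume "finite T" "T \<subseteq> {t\<in>JK. snd t \<le> g}" "lincomb T c (iota g) = vzero" "t \<in> T"
    then show "c t = 0" using indep[of T g c t] by (simp add: lincomb_eq vzero_eq)
  next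
    fix g x assume "x \<in> sp K g"
    then have "x \<in> V.span (G g)" using span_all by blast
    then have "x \<in> V.span (iota g ` {t\<in>JK. snd t \<le> g})" unfolding G_def .
    then show "\<exists>T c. finite T \<and> T \<subseteq> {t\<in>JK. snd t \<le> g} \<and> x = lincomb T c (iota g)"
      by (rule span_to_lincomb)
  qed
qed


end


lemma act_zero': "is_pmod M \<Longrightarrow> 0 \<le> s \<Longrightarrow> act M g s 0 = 0"
  using act_zero[of M g "g + s"] by simp

lemma morph_zero_map:
  assumes A: "is_pmod A" and B: "is_pmod B" and Az: "\<And>g. sp A g = {0}"
  shows "morph A B (\<lambda>g x. 0)"
  unfolding morph_def linear_on_eq
  using A B V.subspace_0[OF pmod_sub[OF B]] act_zero'[OF B] by (auto simp: V.scale_zero_right Az)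

lemma morph_incl:
  assumes dm: "morph F1 F0 dd"
  shows "morph (kermod F1 dd) F1 (\<lambda>g x. x)"
  unfolding morph_def linear_on_eq
proof (intro conjI allI impI ballI kermod_pmod[OF dm] morph_pm1[OF dm])
  fix g show "(\<lambda>x. x) ` sp (kermod F1 dd) g \<subseteq> sp F1 g" by (auto simp: kermod_sp)
qed (auto simp: kermod_act)

lemma part1:
  assumes fp: "finitely_presented (M :: ('i, 'k::field) pmod)"
  shows "\<exists>(F :: nat \<Rightarrow> (nat, 'k) pmod) d e. free_resolution M F d e"
proof -
  have "\<exists>(F0 :: (nat, 'k) pmod) (F1 :: (nat, 'k) pmod) d p.
        fg_free F0 \<and> fg_free F1 \<and> morph F1 F0 d \<and> morph F0 M p \<and>
        (\<forall>g. p g ` sp F0 g = sp M g \<and> {x\<in>sp F0 g. p g x = vzero} = d g ` sp F1 g)"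
    using fp unfolding finitely_presented_def by (rule conjunct2)
  then obtain F0 :: "(nat, 'k) pmod" and F1 :: "(nat, 'k) pmod" and dd p where
    F0: "fg_free F0" and F1: "fg_free F1" and dm: "morph F1 F0 dd" and pm: "morph F0 M p"
    and ps: "\<forall>g. p g ` sp F0 g = sp M g \<and> {x\<in>sp F0 g. p g x = vzero} = dd g ` sp F1 g"
    by (elim exE conjE)
  obtain J where J: "finite J" "free_basis F1 J" using F1 by (auto simp: fg_free_def)
  have F0f: "is_free F0" using F0 by (auto simp: fg_free_def is_free_def)
  have F1f: "is_free F1" using F1 by (auto simp: fg_free_def is_free_def)
  interpret kf F1 F0 dd J by unfold_locales (use dm F0f J in auto)
  define FF :: "nat \<Rightarrow> (nat, 'k) pmod" where
    "FF i = (if i = 0 then F0 else if i = 1 then F1 else if i = 2 then kermod F1 dd else zmod)" for i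
  define DD :: "nat \<Rightarrow> real \<Rightarrow> (nat \<Rightarrow> 'k) \<Rightarrow> (nat \<Rightarrow> 'k)" where
    "DD i = (if i = 0 then dd else if i = 1 then (\<lambda>g x. x) else (\<lambda>g x. 0))" for i
  have Kz: "0 \<in> sp (kermod F1 dd) g" for g using V.subspace_0[OF pmod_sub[OF Kpm]] .
  have "free_resolution M FF DD p"
    unfolding free_resolution_def
  proof (intro conjI allI)
    fix i show "is_free (FF i)"
    proof -
      have zf: "is_free (zmod :: (nat, 'k) pmod)" by (rule zmod_free)
      show ?thesis unfolding FF_def using F0f F1f K_free zf by simp
    qed
  next
    fix i show "morph (FF (Suc i)) (FF i) (DD i)"
    proof (cases "i = 0")
      case True then show ?thesis using dm by (simp add: FF_def DD_def)
    next
      case i0: False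
      show ?thesis
      proof (cases "i = 1")
        case True then show ?thesis using morph_incl[OF dm] by (simp add: FF_def DD_def)
      next
        case i1: False
        show ?thesis
        proof (cases "i = 2")
          case True then show ?thesis using morph_zero_map[OF zmod_pmod Kpm zmod_sp]
            by (simp add: FF_def DD_def)
        next
          case False then show ?thesis using morph_zero_map[OF zmod_pmod zmod_pmod zmod_sp] i0 i1
            by (simp add: FF_def DD_def)
        qed
      qed
    qed
  next
    show "morph (FF 0) M p" using pm by (simp add: FF_def)
  next
    fix g show "p g ` sp (FF 0) g = sp M g" using ps by (simp add: FF_def)
    show "{x\<in>sp (FF 0) g. p g x = vzero} = DD 0 g ` sp (FF 1) g" using ps by (simp add: FF_def DD_def)
  next
    fix g i
    show "{x\<in>sp (FF (Suc i)) g. DD i g x = vzero} = DD (Suc i) g ` sp (FF (Suc (Suc i))) g"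
    proof (cases "i = 0")
      case True then show ?thesis by (simp add: FF_def DD_def kermod_sp vzero_eq)
    next
      case i0: False
      show ?thesis
      proof (cases "i = 1")
        case True then show ?thesis using Kz by (auto simp: FF_def DD_def zmod_sp vzero_eq)
      next
        case False then show ?thesis using i0 by (auto simp: FF_def DD_def zmod_sp vzero_eq)
      qed
    qed
  qed
  then show ?thesis by blast
qed

theorem proposition6:
  fixes M :: "('i, 'k::field) pmod"
  assumes "finitely_presented M" and "bounded_pmod M"
  shows "(\<exists>(F :: nat \<Rightarrow> (nat, 'k) pmod) d e. free_resolution M F d e) \<and>
         (\<forall>(F :: nat \<Rightarrow> ('j, 'k) pmod) d e. free_resolution M F d e \<longrightarrow>
            critical_series F d \<and>
            (\<forall>bars. barcode_decomp M bars \<longrightarrow> (\<forall>g. chiO F d g = C_coeff bars g)))"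
proof (rule conjI)
  show "\<exists>(F :: nat \<Rightarrow> (nat, 'k) pmod) d e. free_resolution M F d e" by (rule part1[OF assms(1)])
  show "\<forall>(F :: nat \<Rightarrow> ('j, 'k) pmod) d e. free_resolution M F d e \<longrightarrow>
            critical_series F d \<and>
            (\<forall>bars. barcode_decomp M bars \<longrightarrow> (\<forall>g. chiO F d g = C_coeff bars g))"
  proof (intro allI impI)
    fix F :: "nat \<Rightarrow> ('j, 'k) pmod" and d e assume fr: "free_resolution M F d e"
    show "critical_series F d \<and> (\<forall>bars. barcode_decomp M bars \<longrightarrow> (\<forall>g. chiO F d g = C_coeff bars g))"
      by (rule part2[OF assms(1) fr])
  qed
qed


end
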